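(* Let $\sigma_{10}=\frac{1+\sqrt5}{2}$. For $p\in\{4,5,10\}$, the group $\Gamma=\mathcal{S}(p,\sigma_{10})$ is generated by $\mathrm{Stab}_\Gamma(m(R_1))\cup\mathrm{Stab}_\Gamma(m(A))$ where $A$ is either $(R_1R_2)^5$ or $(R_1R_3)^5$. For $p=10$, $\Gamma$ is also generated by $\mathrm{Stab}_\Gamma(m(R_1))\cup\mathrm{Stab}_\Gamma(m(A))$ where $A$ is either $(R_1R_2R_3R_2^{-1})^3$ or $(R_1R_3^{-1}R_2R_3)^3$.
   Context: Let $p\ge2$ be an integer and $\tau\in\mathbb{C}$. Set $u=e^{2\pi i/(3p)}$, $\alpha=2-u^3-\bar u^3$, $\beta=(\bar u^2-u)\tau$ and $H=\begin{pmatrix}\alpha&\beta&\bar\beta\\ \bar\beta&\alpha&\beta\\ \beta&\bar\beta&\alpha\end{pmatrix}$, a Hermitian matrix (of signature $(2,1)$ for the parameters considered) defining the form $\langle X,Y\rangle=Y^*HX$. Let $R_1=\begin{pmatrix}u^2&\tau&-u\bar\tau\\0&\bar u&0\\0&0&\bar u\end{pmatrix}$, $J=\begin{pmatrix}0&0&1\\1&0&0\\0&1&0\end{pmatrix}$, $R_2=JR_1J^{-1}$, $R_3=JR_2J^{-1}$. The group $\mathcal{S}(p,\tau)$ is the subgroup of $U(H)$ generated by $R_1$ and $J$, acting on $H^2_{\mathbb{C}}=\{[X]:\langle X,X\rangle<0\}$ through its image in $PU(H)$; all statements refer to this image. The elements $R_1$ and the listed $A$ are complex reflections (non-identity elements fixing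 pointwise a complex line) in the relevant groups; $m(A)$ denotes the mirror (fixed complex line) of $A$, and $\mathrm{Stab}_\Gamma(m)$ is the setwise stabilizer of $m$ in $\Gamma$. *)

theory Defs
  imports "HOL-Analysis.Analysis"
begin

type_synonym cmat = "complex^3^3"
type_synonym cvec = "complex^3"

definition mat3 :: "complex \<Rightarrow> complex \<Rightarrow> complex \<Rightarrow> complex \<Rightarrow> complex \<Rightarrow> complex
   \<Rightarrow> complex \<Rightarrow> complex \<Rightarrow> complex \<Rightarrow> cmat" where
  "mat3 a b c d e f g h k = vector [vector [a,b,c], vector [d,e,f], vector [g,h,k]]"

definition uu :: "nat \<Rightarrow> complex" where
  "uu p = exp (2 * pi * \<i> / of_nat (3 * p))"

definition alph :: "nat \<Rightarrow> complex" where
  "alph p = 2 - (uu p)^3 - cnj ((uu p)^3)"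

definition bet :: "nat \<Rightarrow> complex \<Rightarrow> complex" where
  "bet p \<tau> = ((cnj (uu p))^2 - uu p) * \<tau>"

definition Hmat :: "nat \<Rightarrow> complex \<Rightarrow> cmat" where
  "Hmat p \<tau> = mat3 (alph p) (bet p \<tau>) (cnj (bet p \<tau>))
                    (cnj (bet p \<tau>)) (alph p) (bet p \<tau>)
                    (bet p \<tau>) (cnj (bet p \<tau>)) (alph p)"

definition herm :: "cmat \<Rightarrow> cvec \<Rightarrow> cvec \<Rightarrow> complex" where
  "herm H X Y = (\<Sum>i\<in>UNIV. \<Sum>j\<in>UNIV. cnj (Y$i) * (H$i$j) * (X$j))"

definition R1 :: "nat \<Rightarrow> complex \<Rightarrow> cmat" where
  "R1 p \<tau> = mat3 ((uu p)^2) \<tau> (- uu p * cnj \<tau>)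
                  0 (cnj (uu p)) 0
                  0 0 (cnj (uu p))"

definition Jm :: cmat where
  "Jm = mat3 0 0 1  1 0 0  0 1 0"

definition R2 :: "nat \<Rightarrow> complex \<Rightarrow> cmat" where
  "R2 p \<tau> = Jm ** R1 p \<tau> ** matrix_inv Jm"

definition R3 :: "nat \<Rightarrow> complex \<Rightarrow> cmat" where
  "R3 p \<tau> = Jm ** R2 p \<tau> ** matrix_inv Jm"

fun mpow :: "cmat \<Rightarrow> nat \<Rightarrow> cmat" where
  "mpow A 0 = mat 1"
| "mpow A (Suc n) = A ** mpow A n"

inductive_set gen_group :: "cmat set \<Rightarrow> cmat set" for S where
  one: "mat 1 \<in> gen_group S"
| mul: "s \<in> S \<Longrightarrow> g \<in> gen_group S \<Longrightarrow> s ** g \<in> gen_group S"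
| mulinv: "s \<in> S \<Longrightarrow> g \<in> gen_group S \<Longrightarrow> matrix_inv s ** g \<in> gen_group S"

text \<open>Mirror of A in complex hyperbolic space (as the cone of negative vectors
  representing points of H^2_C fixed by A in the projective action).\<close>
definition mirror :: "cmat \<Rightarrow> cmat \<Rightarrow> cvec set" where
  "mirror H A = {X. Re (herm H X X) < 0 \<and> (\<exists>c. A *v X = c *s X)}"

definition Stab :: "cmat set \<Rightarrow> cvec set \<Rightarrow> cmat set" where
  "Stab G m = {g \<in> G. (\<lambda>X. g *v X) ` m = m}"

text \<open>S generates G in the projective group PU(H): every element of G agrees up to a
  nonzero scalar with an element of the group generated by S.\<close>
definition proj_generates :: "cmat set \<Rightarrow> cmat set \<Rightarrow> bool" where
  "proj_generates G S \<longleftrightarrow> (\<forall>g\<in>G. \<exists>h\<in>gen_group S. \<exists>c. c \<noteq> 0 \<and> g = mat c ** h)"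

definition sigma10 :: complex where
  "sigma10 = of_real ((1 + sqrt 5) / 2)"

end

theory Submission
  imports Defs
begin


fun pev :: "complex \<Rightarrow> int list \<Rightarrow> complex" where
  "pev x [] = 0"
| "pev x (a # as) = of_int a + x * pev x as"

fun padd :: "int list \<Rightarrow> int list \<Rightarrow> int list" where
  "padd [] ys = ys"
| "padd xs [] = xs"
| "padd (x # xs) (y # ys) = (x + y) # padd xs ys"

lemma pev_padd[simp]: "pev x (padd a b) = pev x a + pev x b"
  by (induction a b rule: padd.induct) (simp_all add: algebra_simps)

lemma length_padd[simp]: "length (padd a b) = max (length a) (length b)"
  by (induction a b rule: padd.induct) simp_all

lemma pev_smul[simp]: "pev x (map ((*) c) ys) = of_int c * pev x ys"
  by (induction ys) (simp_all add: algebra_simps)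

fun pmul :: "int list \<Rightarrow> int list \<Rightarrow> int list" where
  "pmul [] ys = []"
| "pmul (x # xs) ys = padd (map ((*) x) ys) (0 # pmul xs ys)"

lemma pev_pmul[simp]: "pev x (pmul a b) = pev x a * pev x b"
  by (induction a) (simp_all add: algebra_simps)

lemma pev_snoc: "pev x (xs @ [a]) = pev x xs + x ^ length xs * of_int a"
  by (induction xs) (simp_all add: algebra_simps)

lemma pev_butlast: "l \<noteq> [] \<Longrightarrow> pev x l = pev x (butlast l) + x ^ (length l - 1) * of_int (last l)"
  by (metis append_butlast_last_id length_butlast pev_snoc)

definition xstep :: "int list \<Rightarrow> int list \<Rightarrow> int list" where
  "xstep r q = padd (butlast (0 # q)) (map ((*) (last (0 # q))) r)"

lemma xstep_len: "r \<noteq> [] \<Longrightarrow> length q = length r \<Longrightarrow> length (xstep r q) = length r"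
  by (cases r) (simp_all add: xstep_def)

lemma xstep_ev:
  assumes "length q = length r" "x ^ length r = pev x r"
  shows "pev x (xstep r q) = x * pev x q"
proof -
  have "pev x (0 # q) = pev x (butlast (0 # q)) + x ^ (length r) * of_int (last (0 # q))"
    using pev_butlast[of "0 # q" x] assms(1) by simp
  then show ?thesis using assms by (simp add: xstep_def algebra_simps)
qed

fun red :: "int list \<Rightarrow> int list \<Rightarrow> int list" where
  "red r [] = replicate (length r) 0"
| "red r (a # as) = padd [a] (xstep r (red r as))"

lemma pev_rep0[simp]: "pev x (replicate n 0) = 0"
  by (induction n) simp_all

lemma red_len: "r \<noteq> [] \<Longrightarrow> length (red r xs) = length r"
  by (induction xs) (simp_all add: xstep_len max_def Suc_leI)

lemma pev_padd1: "pev x (padd [a] q) = of_int a + pev x q"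
  by simp

lemma red_ev: "r \<noteq> [] \<Longrightarrow> x ^ length r = pev x r \<Longrightarrow> pev x (red r xs) = pev x xs"
  by (induction xs) (simp_all add: xstep_ev red_len)

fun consz :: "int \<Rightarrow> int list \<Rightarrow> int list" where
  "consz a [] = (if a = 0 then [] else [a])"
| "consz a (b # bs) = a # b # bs"

lemma consz_ev[simp]: "pev x (consz a l) = pev x (a # l)"
  by (cases l) simp_all

fun strip :: "int list \<Rightarrow> int list" where
  "strip [] = []"
| "strip (a # as) = consz a (strip as)"

lemma strip_ev[simp]: "pev x (strip xs) = pev x xs"
  by (induction xs) auto

definition nrm :: "int list \<Rightarrow> int list \<Rightarrow> int list" where
  "nrm r xs = strip (red r xs)"

type_synonym el = "int list \<times> int list"

definition ev :: "complex \<Rightarrow> complex \<Rightarrow> el \<Rightarrow> complex" where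
  "ev x s e = pev x (fst e) + s * pev x (snd e)"

definition fin :: "int list \<Rightarrow> int list \<Rightarrow> int list \<Rightarrow> int list \<Rightarrow> el" where
  "fin r ac adbc bd = (nrm r (padd ac bd), nrm r (padd adbc bd))"

fun emul :: "int list \<Rightarrow> el \<Rightarrow> el \<Rightarrow> el" where
  "emul r (a, b) (c, d) = fin r (pmul a c) (padd (pmul a d) (pmul b c)) (pmul b d)"

definition eadd :: "el \<Rightarrow> el \<Rightarrow> el" where
  "eadd e f = (strip (padd (fst e) (fst f)), strip (padd (snd e) (snd f)))"

definition eneg :: "el \<Rightarrow> el" where
  "eneg e = (map uminus (fst e), map uminus (snd e))"

locale fr =
  fixes r :: "int list" and x s :: complex
  assumes rne: "r \<noteq> []" and xr: "x ^ length r = pev x r" and ss: "s^2 = s + 1"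
begin

lemma nrm_ev[simp]: "pev x (nrm r xs) = pev x xs"
  by (simp add: nrm_def red_ev rne xr)

lemma ev_emul[simp]: "ev x s (emul r e f) = ev x s e * ev x s f"
proof -
  have "s * s = s + 1" using ss by (simp add: power2_eq_square)
  have e: "(a + s * b) * (c + s * d) = a * c + s * (a * d + b * c) + (s * s) * (b * d)" for a b c d :: complex
    by (simp add: algebra_simps)
  show ?thesis
    unfolding ev_def emul.simps[of r "fst e" "snd e" "fst f" "snd f", simplified] fin_def e \<open>s * s = s + 1\<close> by (simp add: algebra_simps)
qed

lemma ev_eadd[simp]: "ev x s (eadd e f) = ev x s e + ev x s f"
  by (simp add: ev_def eadd_def algebra_simps)

lemma pev_neg[simp]: "pev y (map uminus l) = - pev y l"
  by (induction l) simp_all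

lemma ev_eneg[simp]: "ev x s (eneg e) = - ev x s e"
  by (simp add: ev_def eneg_def algebra_simps)
end


datatype rm = RM el el el el el el el el el

definition dot3 :: "int list \<Rightarrow> el \<Rightarrow> el \<Rightarrow> el \<Rightarrow> el \<Rightarrow> el \<Rightarrow> el \<Rightarrow> el" where
  "dot3 r a b c d e f = eadd (eadd (emul r a d) (emul r b e)) (emul r c f)"

fun rmul :: "int list \<Rightarrow> rm \<Rightarrow> rm \<Rightarrow> rm" where
  "rmul r (RM a11 a12 a13 a21 a22 a23 a31 a32 a33) (RM b11 b12 b13 b21 b22 b23 b31 b32 b33) =
    RM (dot3 r a11 a12 a13 b11 b21 b31) (dot3 r a11 a12 a13 b12 b22 b32) (dot3 r a11 a12 a13 b13 b23 b33)
       (dot3 r a21 a22 a23 b11 b21 b31) (dot3 r a21 a22 a23 b12 b22 b32) (dot3 r a21 a22 a23 b13 b23 b33)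
       (dot3 r a31 a32 a33 b11 b21 b31) (dot3 r a31 a32 a33 b12 b22 b32) (dot3 r a31 a32 a33 b13 b23 b33)"

fun mev :: "complex \<Rightarrow> complex \<Rightarrow> rm \<Rightarrow> cmat" where
  "mev x s (RM a b c d e f g h k) = mat3 (ev x s a) (ev x s b) (ev x s c) (ev x s d) (ev x s e) (ev x s f) (ev x s g) (ev x s h) (ev x s k)"

lemma mat3_mult: "mat3 a b c d e f g h k ** mat3 a' b' c' d' e' f' g' h' k' =
  mat3 (a*a' + b*d' + c*g') (a*b' + b*e' + c*h') (a*c' + b*f' + c*k')
       (d*a' + e*d' + f*g') (d*b' + e*e' + f*h') (d*c' + e*f' + f*k')
       (g*a' + h*d' + k*g') (g*b' + h*e' + k*h') (g*c' + h*f' + k*k')"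
  unfolding mat3_def by (simp add: vec_eq_iff forall_3 matrix_matrix_mult_def sum_3)

lemma mat3_eq: "(mat3 a b c d e f g h k = mat3 a' b' c' d' e' f' g' h' k') \<longleftrightarrow>
   (a = a' \<and> b = b' \<and> c = c' \<and> d = d' \<and> e = e' \<and> f = f' \<and> g = g' \<and> h = h' \<and> k = k')"
  unfolding mat3_def by (simp add: vec_eq_iff forall_3)

context fr begin
lemma mev_mul: "mev x s (rmul r A B) = mev x s A ** mev x s B"
  by (cases A; cases B) (simp add: mat3_mult dot3_def)
end


definition um :: "int list \<Rightarrow> nat \<Rightarrow> el" where "um r k = (nrm r (replicate k 0 @ [1]), [])"
definition z0 :: el where "z0 = ([],[])"
definition o1 :: el where "o1 = ([1],[])"

context fr begin
lemma ev_um[simp]: "ev x s (um r k) = x ^ k"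
  by (simp add: um_def ev_def pev_snoc)
end

lemma ev_z0[simp]: "ev x s z0 = 0" by (simp add: ev_def z0_def)
lemma ev_o1[simp]: "ev x s o1 = 1" by (simp add: ev_def o1_def)

definition cadj :: "cmat \<Rightarrow> cmat" where
  "cadj A = (\<chi> i j. cnj (A $ j $ i))"

lemma cadj_mat3: "cadj (mat3 a b c d e f g h k) = mat3 (cnj a) (cnj d) (cnj g) (cnj b) (cnj e) (cnj h) (cnj c) (cnj f) (cnj k)"
  unfolding cadj_def mat3_def by (simp add: vec_eq_iff forall_3)

lemma cadj_mult: "cadj (A ** B) = cadj B ** cadj A"
  unfolding cadj_def by (simp add: vec_eq_iff matrix_matrix_mult_def mult.commute)

lemma cadj_one: "cadj (mat 1) = mat 1"
  unfolding cadj_def by (simp add: vec_eq_iff mat_def)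

lemma minv_eq: fixes A B :: cmat assumes "A ** B = mat 1" "B ** A = mat 1" shows "matrix_inv A = B"
proof -
  have ex: "\<exists>A'. A ** A' = mat 1 \<and> A' ** A = mat 1" using assms by blast
  define A' where "A' = matrix_inv A"
  have h: "A ** A' = mat 1 \<and> A' ** A = mat 1"
    unfolding A'_def matrix_inv_def by (rule someI_ex[OF ex])
  have "A' = A' ** (A ** B)" using assms by simp
  also have "\<dots> = (A' ** A) ** B" by (simp add: matrix_mul_assoc)
  also have "\<dots> = B" using h by simp
  finally show ?thesis unfolding A'_def .
qed

lemma gen_mult: "g \<in> gen_group S \<Longrightarrow> h \<in> gen_group S \<Longrightarrow> g ** h \<in> gen_group S"
  by (induction g rule: gen_group.induct) (auto simp: matrix_mul_assoc[symmetric] intro: gen_group.intros)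

lemma gen_S: "s \<in> S \<Longrightarrow> s \<in> gen_group S"
  using gen_group.mul[OF _ gen_group.one] by fastforce

lemma gen_Si: "s \<in> S \<Longrightarrow> matrix_inv s \<in> gen_group S"
  using gen_group.mulinv[OF _ gen_group.one] by fastforce

lemma herm_mult: "herm H (g *v X) (g *v Y) = herm (cadj g ** H ** g) X Y"
  unfolding herm_def cadj_def matrix_vector_mult_def matrix_matrix_mult_def
  by (simp add: sum_3 algebra_simps)

lemma mv_scal: "(g::cmat) *v (c *s X) = c *s (g *v X)"
  by (simp add: vec_eq_iff matrix_vector_mult_def sum_distrib_left algebra_simps)

lemma mat_scal_comm: "mat c ** (A::cmat) = A ** mat c"
  by (simp add: vec_eq_iff matrix_matrix_mult_def mat_def sum_3 forall_3)


definition unitary :: "cmat \<Rightarrow> cmat \<Rightarrow> bool" where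
  "unitary H g \<longleftrightarrow> cadj g ** H ** g = H"

definition good :: "cmat \<Rightarrow> cmat \<Rightarrow> bool" where
  "good H g \<longleftrightarrow> (\<exists>g'. g ** g' = mat 1 \<and> g' ** g = mat 1) \<and> unitary H g"

lemma unitary_inv: "unitary H g \<Longrightarrow> g ** g' = mat 1 \<Longrightarrow> unitary H g'"
proof -
  assume u: "unitary H g" and gi: "g ** g' = mat 1"
  have "cadj g' ** H ** g' = cadj g' ** (cadj g ** H ** g) ** g'" using u by (simp add: unitary_def)
  also have "\<dots> = cadj (g ** g') ** H ** (g ** g')" by (simp add: cadj_mult matrix_mul_assoc)
  also have "\<dots> = H" using gi by (simp add: cadj_one)
  finally show ?thesis by (simp add: unitary_def)
qed

lemma good_mult: "good H a \<Longrightarrow> good H b \<Longrightarrow> good H (a ** b)"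
proof -
  assume a: "good H a" and b: "good H b"
  then obtain a' b' where ai: "a ** a' = mat 1" "a' ** a = mat 1" and bi: "b ** b' = mat 1" "b' ** b = mat 1"
    by (auto simp: good_def)
  have "(a ** b) ** (b' ** a') = mat 1" using ai bi by (metis matrix_mul_assoc matrix_mul_rid)
  moreover have "(b' ** a') ** (a ** b) = mat 1" using ai bi by (metis matrix_mul_assoc matrix_mul_rid)
  moreover have "unitary H (a ** b)"
  proof -
    have "cadj (a ** b) ** H ** (a ** b) = cadj b ** (cadj a ** H ** a) ** b"
      by (simp add: cadj_mult matrix_mul_assoc)
    also have "\<dots> = H" using a b by (simp add: good_def unitary_def)
    finally show ?thesis by (simp add: unitary_def)
  qed
  ultimately show ?thesis unfolding good_def by blast
qed

lemma good_inv: "good H a \<Longrightarrow> good H (matrix_inv a)"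
proof -
  assume a: "good H a"
  then obtain a' where ai: "a ** a' = mat 1" "a' ** a = mat 1" by (auto simp: good_def)
  have "matrix_inv a = a'" using minv_eq ai by blast
  moreover have "unitary H a'" using a ai unitary_inv by (auto simp: good_def)
  ultimately show ?thesis using ai unfolding good_def by blast
qed

lemma good_one: "good H (mat 1)"
  by (auto simp: good_def unitary_def cadj_one)

lemma gamma_good: assumes "good H a" "good H j" shows "g \<in> gen_group {a, j} \<Longrightarrow> good H g"
  by (induction g rule: gen_group.induct) (use assms in \<open>auto intro: good_mult good_inv good_one\<close>)

lemma mirror_map:
  assumes "unitary H g" "g ** A = A ** g" "X \<in> mirror H A"
  shows "g *v X \<in> mirror H A"
proof -
  obtain c where c: "A *v X = c *s X" and n: "Re (herm H X X) < 0" using assms(3) by (auto simp: mirror_def)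
  have "herm H (g *v X) (g *v X) = herm H X X"
    using assms(1) by (simp add: herm_mult unitary_def)
  moreover have "A *v (g *v X) = c *s (g *v X)"
    by (metis assms(2) c matrix_vector_mul_assoc mv_scal)
  ultimately show ?thesis using n by (auto simp: mirror_def)
qed

lemma stab_lemma:
  assumes "g \<in> G" "good H g" "g ** A = A ** g"
  shows "g \<in> Stab G (mirror H A)"
proof -
  obtain g' where gi: "g ** g' = mat 1" "g' ** g = mat 1" and u: "unitary H g" using assms(2) by (auto simp: good_def)
  have u': "unitary H g'" using u gi unitary_inv by blast
  have c': "g' ** A = A ** g'"
  proof -
    have "g' ** A = g' ** A ** (g ** g')" using gi by simp
    also have "\<dots> = g' ** (g ** A) ** g'" using assms(3) by (simp add: matrix_mul_assoc)
    also have "\<dots> = A ** g'" using gi by (simp add: matrix_mul_assoc)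
    finally show ?thesis .
  qed
  have "(\<lambda>X. g *v X) ` mirror H A = mirror H A"
  proof
    show "(\<lambda>X. g *v X) ` mirror H A \<subseteq> mirror H A" using mirror_map[OF u assms(3)] by blast
    show "mirror H A \<subseteq> (\<lambda>X. g *v X) ` mirror H A"
    proof
      fix X assume X: "X \<in> mirror H A"
      have "X = g *v (g' *v X)" using gi by (simp add: matrix_vector_mul_assoc)
      moreover have "g' *v X \<in> mirror H A" using mirror_map[OF u' c' X] .
      ultimately show "X \<in> (\<lambda>X. g *v X) ` mirror H A" by blast
    qed
  qed
  then show ?thesis using assms(1) by (simp add: Stab_def)
qed

lemma scal_assoc: "(A::cmat) ** (mat c ** B) = mat c ** (A ** B)"
  by (metis mat_scal_comm matrix_mul_assoc)

lemma mat_mat: "mat c ** mat d = (mat (c * d) :: cmat)"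
  by (simp add: vec_eq_iff matrix_matrix_mult_def mat_def sum_3 forall_3)

lemma pg_lemma:
  fixes a j w :: cmat
  assumes "a \<in> S" "matrix_inv j = j ** j" "j = mat c ** w" "w \<in> gen_group S" "c \<noteq> 0"
  shows "proj_generates (gen_group {a, j}) S"
proof -
  let ?P = "\<lambda>g. \<exists>h\<in>gen_group S. \<exists>c. c \<noteq> 0 \<and> g = mat c ** h"
  have pa: "?P (a ** g)" if "?P g" for g
  proof -
    obtain h d where h: "h \<in> gen_group S" "d \<noteq> 0" "g = mat d ** h" using \<open>?P g\<close> by blast
    have "a ** h \<in> gen_group S" using h(1) assms(1) by (rule gen_group.mul[rotated])
    moreover have "a ** g = mat d ** (a ** h)" using h(3) by (simp only: scal_assoc[of a d h])
    ultimately show ?thesis using h(2) by blast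
  qed
  have pai: "?P (matrix_inv a ** g)" if "?P g" for g
  proof -
    obtain h d where h: "h \<in> gen_group S" "d \<noteq> 0" "g = mat d ** h" using \<open>?P g\<close> by blast
    have "matrix_inv a ** h \<in> gen_group S" using h(1) assms(1) by (rule gen_group.mulinv[rotated])
    moreover have "matrix_inv a ** g = mat d ** (matrix_inv a ** h)" using h(3) by (simp only: scal_assoc[of "matrix_inv a" d h])
    ultimately show ?thesis using h(2) by blast
  qed
  have pj: "?P (j ** g)" if "?P g" for g
  proof -
    obtain h d where h: "h \<in> gen_group S" "d \<noteq> 0" "g = mat d ** h" using \<open>?P g\<close> by blast
    have "w ** h \<in> gen_group S" using h(1) assms(4) gen_mult by blast
    moreover have "j ** g = mat (c * d) ** (w ** h)"
    proof -
      have "j ** g = mat c ** (w ** (mat d ** h))" unfolding h(3) assms(3) by (rule matrix_mul_assoc[symmetric])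
      also have "\<dots> = mat c ** (mat d ** (w ** h))" by (simp only: scal_assoc[of w d h])
      also have "\<dots> = mat (c * d) ** (w ** h)" by (simp only: matrix_mul_assoc mat_mat)
      finally show ?thesis .
    qed
    ultimately show ?thesis using h(2) assms(5) by (metis mult_eq_0_iff)
  qed
  have "?P g" if "g \<in> gen_group {a, j}" for g
    using that
  proof (induction g rule: gen_group.induct)
    case one
    have "mat 1 \<in> gen_group S" by (rule gen_group.one)
    moreover have "(1::complex) \<noteq> 0" by simp
    moreover have "mat 1 = mat 1 ** (mat 1 :: cmat)" by simp
    ultimately show ?case by blast
  next
    case (mul s g) then show ?case using pa pj by blast
  next
    case (mulinv s g)
    show ?case
    proof (cases "s = a")
      case True then show ?thesis using pai mulinv by blast
    next
      case False
      then have "s = j" using mulinv by blast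
      then have "matrix_inv s ** g = j ** (j ** g)" using assms(2) by (simp add: matrix_mul_assoc)
      then show ?thesis using pj mulinv by metis
    qed
  qed
  then show ?thesis unfolding proj_generates_def by blast
qed

lemma mpow_comm: "X ** mpow X n = mpow X n ** X"
  by (induction n) (simp_all add: matrix_mul_assoc)



lemma uu_pow: "uu p ^ k = exp (of_nat k * (2 * pi * \<i> / of_nat (3 * p)))"
  unfolding uu_def by (rule exp_of_nat_mult[symmetric])

lemma uu_N: "p > 0 \<Longrightarrow> uu p ^ (3 * p) = 1"
proof -
  assume "p > 0"
  then have "of_nat (3 * p) * (2 * of_real pi * \<i> / of_nat (3 * p)) = (2 * of_real pi * \<i> :: complex)"
    by (simp del: of_nat_mult)
  then show ?thesis unfolding uu_pow by simp
qed

lemma uu_ne1: assumes "0 < k" "k < 3 * p" shows "uu p ^ k \<noteq> 1"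
proof
  assume "uu p ^ k = 1"
  then obtain n :: int where n: "Im (of_nat k * (2 * pi * \<i> / of_nat (3 * p))) = of_int (2 * n) * pi"
    unfolding uu_pow exp_eq_1 by blast
  have "real k * (2 * pi) / real (3 * p) = 2 * real_of_int n * pi" using n by simp
  then have "real k = real_of_int n * real (3 * p)" using assms by (simp add: field_simps)
  then have "int k = n * int (3 * p)" by (metis of_int_eq_iff of_int_mult of_int_of_nat_eq)
  moreover have "int k > 0" "int k < int (3 * p)" using assms by simp_all
  ultimately show False
  proof (cases "n \<le> 0")
    case True
    then have "n * int (3 * p) \<le> 0" by (simp add: mult_nonpos_nonneg)
    then show False using \<open>int k = n * int (3 * p)\<close> \<open>int k > 0\<close> by linarith
  next
    case False
    then have "n * int (3 * p) \<ge> 1 * int (3 * p)" by (intro mult_right_mono) simp_all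
    then show False using \<open>int k = n * int (3 * p)\<close> \<open>int k < int (3 * p)\<close> by linarith
  qed
qed

lemma uu_norm: "cmod (uu p) = 1"
  unfolding uu_def by (simp add: norm_exp_eq_Re)

lemma uu_nz: "uu p \<noteq> 0"
  unfolding uu_def by simp

lemma uu_cnj: assumes "p > 0" "k \<le> 3 * p" shows "cnj (uu p ^ k) = uu p ^ (3 * p - k)"
proof -
  have a: "cnj (uu p ^ k) * uu p ^ k = 1"
    using uu_norm[of p] by (metis complex_norm_square mult.commute norm_one norm_power of_real_1 power_one)
  have b: "uu p ^ (3 * p - k) * uu p ^ k = 1"
    using uu_N[OF assms(1)] assms(2) by (metis le_add_diff_inverse2 power_add)
  have "uu p ^ k \<noteq> 0" using uu_nz by simp
  then show ?thesis using a b by (metis mult_right_cancel)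
qed

lemma sig_sq: "sigma10 ^ 2 = sigma10 + 1"
proof -
  have "(sqrt 5)^2 = 5" by simp
  then have e: "((1 + sqrt 5) / 2) ^ 2 = (1 + sqrt 5) / 2 + 1" by (simp add: power2_eq_square field_simps)
  have "sigma10 ^ 2 = of_real (((1 + sqrt 5) / 2) ^ 2)" unfolding sigma10_def by (simp only: of_real_power)
  also have "\<dots> = of_real ((1 + sqrt 5) / 2 + 1)" by (simp only: e)
  also have "\<dots> = sigma10 + 1" unfolding sigma10_def by simp
  finally show ?thesis .
qed

lemma sig_cnj: "cnj sigma10 = sigma10"
  unfolding sigma10_def by simp

lemma sig_from5:
  fixes z :: complex
  assumes "z ^ 5 = 1" "z \<noteq> 1" "0 < Re z" "cnj z = z ^ 4"
  shows "1 + z + z ^ 4 = sigma10"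
proof -
  have "(z - 1) * (1 + z + z^2 + z^3 + z^4) = z^5 - 1" by (simp add: algebra_simps power_def eval_nat_numeral)
  then have p5: "1 + z + z^2 + z^3 + z^4 = 0" using assms(1,2) by simp
  define t where "t = z + z ^ 4"
  have "t^2 + t - 1 = (1 + z + z^2 + z^3 + z^4) + z^3 * (z^5 - 1) + 2 * (z^5 - 1)"
    unfolding t_def by (simp add: algebra_simps power2_eq_square eval_nat_numeral)
  then have tq: "t^2 + t - 1 = 0" using p5 assms(1) by simp
  have "t = of_real (2 * Re z)" unfolding t_def using assms(4)
    by (metis complex_add_cnj)
  moreover have "2 * Re z > 0" using assms(3) by simp
  ultimately obtain tr where tr: "t = of_real tr" "tr > 0" by blast
  have "of_real (tr^2 + tr - 1) = (0::complex)" using tq tr(1) by simp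
  then have "tr^2 + tr - 1 = 0" by (metis of_real_eq_0_iff)
  then have "(2 * tr + 1)^2 = (sqrt 5)^2" by (simp add: power2_eq_square algebra_simps)
  then have "2 * tr + 1 = sqrt 5" using power2_eq_iff_nonneg[of "2*tr+1" "sqrt 5"] tr(2) by simp
  then have e: "1 + tr = (1 + sqrt 5) / 2" by simp
  have "1 + z + z ^ 4 = 1 + t" by (simp add: t_def)
  also have "\<dots> = of_real (1 + tr)" using tr(1) by simp
  also have "\<dots> = sigma10" unfolding sigma10_def e ..
  finally show ?thesis .
qed



definition Jr :: rm where "Jr = RM z0 z0 o1 o1 z0 z0 z0 o1 z0"
definition Jir :: rm where "Jir = RM z0 o1 z0 z0 z0 o1 o1 z0 z0"
definition Ir :: rm where "Ir = RM o1 z0 z0 z0 o1 z0 z0 z0 o1"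
definition scr :: "el \<Rightarrow> rm" where "scr c = RM c z0 z0 z0 c z0 z0 z0 c"

definition R1rep :: "int list \<Rightarrow> nat \<Rightarrow> el \<Rightarrow> rm" where
  "R1rep r N sg = RM (um r 2) sg (eneg (emul r (um r 1) sg)) z0 (um r (N-1)) z0 z0 z0 (um r (N-1))"
definition R1irep :: "int list \<Rightarrow> nat \<Rightarrow> el \<Rightarrow> rm" where
  "R1irep r N sg = RM (um r (N-2)) (eneg (emul r (um r (N-1)) sg)) sg z0 (um r 1) z0 z0 z0 (um r 1)"
definition R1arep :: "int list \<Rightarrow> nat \<Rightarrow> el \<Rightarrow> rm" where
  "R1arep r N sg = RM (um r ((N-1)*2)) z0 z0 sg (um r 1) z0 (eneg (emul r (um r (N-1)) sg)) z0 (um r 1)"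
definition hal :: "int list \<Rightarrow> nat \<Rightarrow> el" where
  "hal r N = eadd (eadd (eadd o1 o1) (eneg (um r 3))) (eneg (um r ((N-1)*3)))"
definition hbe :: "int list \<Rightarrow> nat \<Rightarrow> el \<Rightarrow> el" where
  "hbe r N sg = emul r (eadd (um r ((N-1)*2)) (eneg (um r 1))) sg"
definition hcb :: "int list \<Rightarrow> nat \<Rightarrow> el \<Rightarrow> el" where
  "hcb r N sg = emul r (eadd (um r 2) (eneg (um r (N-1)))) sg"
definition Hrep :: "int list \<Rightarrow> nat \<Rightarrow> el \<Rightarrow> rm" where
  "Hrep r N sg = RM (hal r N) (hbe r N sg) (hcb r N sg) (hcb r N sg) (hal r N) (hbe r N sg) (hbe r N sg) (hcb r N sg) (hal r N)"

lemma mev_J: "Jm = mev x s Jr"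
  by (simp add: Jm_def Jr_def z0_def o1_def ev_def)
lemma mev_I: "mat 1 = mev x s Ir"
  by (simp add: Ir_def z0_def o1_def ev_def mat3_def vec_eq_iff mat_def forall_3)
lemma mev_sc: "mat (ev x s c) = mev x s (scr c)"
  by (simp add: scr_def z0_def ev_def mat3_def vec_eq_iff mat_def forall_3)
lemma cadj_J: "cadj Jm = mev x s Jir"
  by (simp add: Jm_def Jir_def z0_def o1_def ev_def cadj_mat3)

lemma cnj_u1: "p > 0 \<Longrightarrow> cnj (uu p) = uu p ^ (3 * p - 1)"
  using uu_cnj[of p 1] by simp
lemma cnj_u2: "p > 0 \<Longrightarrow> cnj (uu p ^ 2) = uu p ^ (3 * p - 2)"
  using uu_cnj[of p 2] by simp
lemma cnj_u3: "p > 0 \<Longrightarrow> cnj (uu p ^ 3) = uu p ^ (3 * p - 3)"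
  using uu_cnj[of p 3] by simp

lemmas cnj_push = complex_cnj_mult complex_cnj_diff complex_cnj_minus complex_cnj_power complex_cnj_cnj
  complex_cnj_zero complex_cnj_one sig_cnj complex_cnj_numeral

lemma ev_R1:
  assumes F: "fr r (uu p) sigma10" and "p > 0" "ev (uu p) sigma10 sg = sigma10"
  shows "R1 p sigma10 = mev (uu p) sigma10 (R1rep r (3 * p) sg)"
  unfolding R1_def R1rep_def
  apply (simp only: cnj_push)
  using assms cnj_u1[of p] by (simp add: fr.ev_um[OF F] fr.ev_emul[OF F] fr.ev_eneg fr.ev_eadd power_mult[symmetric])

lemma ev_R1a:
  assumes F: "fr r (uu p) sigma10" and "p > 0" "ev (uu p) sigma10 sg = sigma10"
  shows "cadj (R1 p sigma10) = mev (uu p) sigma10 (R1arep r (3 * p) sg)"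
  unfolding R1_def R1arep_def cadj_mat3
  apply (simp only: cnj_push)
  using assms cnj_u1[of p] by (simp add: fr.ev_um[OF F] fr.ev_emul[OF F] fr.ev_eneg fr.ev_eadd power_mult[symmetric])

lemma ev_H:
  assumes F: "fr r (uu p) sigma10" and "p > 0" "ev (uu p) sigma10 sg = sigma10"
  shows "Hmat p sigma10 = mev (uu p) sigma10 (Hrep r (3 * p) sg)"
  unfolding Hmat_def Hrep_def hal_def hbe_def hcb_def alph_def bet_def
  apply (simp only: cnj_push)
  using assms cnj_u1[of p] by (simp add: fr.ev_um[OF F] fr.ev_emul[OF F] fr.ev_eneg fr.ev_eadd power_mult[symmetric])

lemma mpow3: "mpow A 3 = A ** (A ** (A ** mat 1))"
  by (simp add: numeral_3_eq_3)


definition r4 :: "int list" where "r4 = [-1,0,1,0::int]"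
definition sg4 :: el where "sg4 = ([], [1])"
definition R1r4 :: rm where "R1r4 = R1rep r4 (3 * 4) sg4"
definition R1ir4 :: rm where "R1ir4 = R1irep r4 (3 * 4) sg4"
definition R1ar4 :: rm where "R1ar4 = R1arep r4 (3 * 4) sg4"
definition Hr4 :: rm where "Hr4 = Hrep r4 (3 * 4) sg4"

lemma phi4: "uu 4 ^ 4 = pev (uu 4) r4"
proof -
  define x where "x = uu 4"
  have xN: "x ^ 12 = 1" unfolding x_def using uu_N[of 4] by simp
  have ne6: "x ^ 6 \<noteq> 1" unfolding x_def using uu_ne1[of 6 4] by simp
  have ne4: "x ^ 4 \<noteq> 1" unfolding x_def using uu_ne1[of 4 4] by simp
  have id: "(x^4 - x^2 + 1) * ((x^6 - 1) * (x^4 - 1)) = (x^12 - 1) * (x^2 - 1)" by algebra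
  then have "(x^4 - x^2 + 1) * ((x^6 - 1) * (x^4 - 1)) = 0" using xN by simp
  then have ph: "x^4 - x^2 + 1 = 0" using ne6 ne4 by simp
  show ?thesis unfolding x_def[symmetric] r4_def using ph by simp algebra
qed

lemma fr4: "fr r4 (uu 4) sigma10"
proof -
  have l: "length r4 = 4" by (simp add: r4_def)
  show ?thesis unfolding fr_def l using phi4 sig_sq by (simp add: r4_def del: pev.simps)
qed

lemmas fold4 = fr.mev_mul[OF fr4, symmetric]

lemma sgv4: "ev (uu 4) sigma10 sg4 = sigma10" by (simp add: sg4_def ev_def)

lemma R1eq4: "R1 4 sigma10 = mev (uu 4) sigma10 R1r4"
  unfolding R1r4_def by (rule ev_R1[OF fr4 _ sgv4]) simp
lemma Heq4: "Hmat 4 sigma10 = mev (uu 4) sigma10 Hr4"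
  unfolding Hr4_def by (rule ev_H[OF fr4 _ sgv4]) simp
lemma R1aeq4: "cadj (mev (uu 4) sigma10 R1r4) = mev (uu 4) sigma10 R1ar4"
  unfolding R1eq4[symmetric] R1ar4_def by (rule ev_R1a[OF fr4 _ sgv4]) simp
lemmas Jeq4 = mev_J[of "uu 4" sigma10]
lemmas Ieq4 = mev_I[of "uu 4" sigma10]
lemmas Jaeq4 = cadj_J[of "uu 4" sigma10, unfolded Jeq4]

lemma R1inv4: "matrix_inv (mev (uu 4) sigma10 R1r4) = mev (uu 4) sigma10 R1ir4"
  apply (rule minv_eq)
  apply (simp only: Ieq4 fold4)
  apply (rule arg_cong[where f="mev (uu 4) sigma10"])
  apply code_simp
  apply (simp only: Ieq4 fold4)
  apply (rule arg_cong[where f="mev (uu 4) sigma10"])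
  by code_simp

lemma Jinv4: "matrix_inv (mev (uu 4) sigma10 Jr) = mev (uu 4) sigma10 Jir"
  apply (rule minv_eq)
  apply (simp only: Ieq4 fold4)
  apply (rule arg_cong[where f="mev (uu 4) sigma10"])
  apply code_simp
  apply (simp only: Ieq4 fold4)
  apply (rule arg_cong[where f="mev (uu 4) sigma10"])
  by code_simp

lemma uR1_4: "unitary (Hmat 4 sigma10) (R1 4 sigma10)"
  unfolding unitary_def
  apply (simp only: R1eq4 Heq4 R1aeq4 fold4)
  apply (rule arg_cong[where f="mev (uu 4) sigma10"])
  by code_simp

lemma uJ_4: "unitary (Hmat 4 sigma10) Jm"
  unfolding unitary_def
  apply (simp only: Jeq4 Heq4 Jaeq4 fold4)
  apply (rule arg_cong[where f="mev (uu 4) sigma10"])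
  by code_simp

lemma good_R1_4: "good (Hmat 4 sigma10) (R1 4 sigma10)"
proof -
  have "R1 4 sigma10 ** matrix_inv (R1 4 sigma10) = mat 1"
  apply (simp only: R1eq4 Jeq4 Ieq4 R1inv4 Jinv4 fold4)
  apply (rule arg_cong[where f="mev (uu 4) sigma10"])
  by code_simp
  moreover have "matrix_inv (R1 4 sigma10) ** R1 4 sigma10 = mat 1"
  apply (simp only: R1eq4 Jeq4 Ieq4 R1inv4 Jinv4 fold4)
  apply (rule arg_cong[where f="mev (uu 4) sigma10"])
  by code_simp
  ultimately show ?thesis unfolding good_def using uR1_4 by blast
qed

lemma good_J_4: "good (Hmat 4 sigma10) Jm"
proof -
  have "Jm ** matrix_inv Jm = mat 1"
  apply (simp only: R1eq4 Jeq4 Ieq4 R1inv4 Jinv4 fold4)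
  apply (rule arg_cong[where f="mev (uu 4) sigma10"])
  by code_simp
  moreover have "matrix_inv Jm ** Jm = mat 1"
  apply (simp only: R1eq4 Jeq4 Ieq4 R1inv4 Jinv4 fold4)
  apply (rule arg_cong[where f="mev (uu 4) sigma10"])
  by code_simp
  ultimately show ?thesis unfolding good_def using uJ_4 by blast
qed

lemmas gam4 = gamma_good[OF good_R1_4 good_J_4]

lemma l1_4: "R1 4 sigma10 \<in> gen_group {R1 4 sigma10, Jm}" by (rule gen_S) simp
lemma l2_4: "Jm \<in> gen_group {R1 4 sigma10, Jm}" by (rule gen_S) simp
lemma l3_4: "matrix_inv (R1 4 sigma10) \<in> gen_group {R1 4 sigma10, Jm}" by (rule gen_Si) simp
lemma l4_4: "matrix_inv Jm \<in> gen_group {R1 4 sigma10, Jm}" by (rule gen_Si) simp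
lemmas ls4 = l1_4 l2_4 l3_4 l4_4

lemma s1_4: "R1 4 sigma10 \<in> Stab (gen_group {R1 4 sigma10, Jm}) (mirror (Hmat 4 sigma10) (R1 4 sigma10))"
  by (rule stab_lemma[OF l1_4 gam4[OF l1_4] refl])

lemma Jinv2_4: "matrix_inv Jm = Jm ** Jm"
  apply (simp only: R1eq4 Jeq4 Ieq4 R1inv4 Jinv4 fold4)
  apply (rule arg_cong[where f="mev (uu 4) sigma10"])
  by code_simp


lemma c1_4X_mem: "(R1 4 sigma10 ** R2 4 sigma10) \<in> gen_group {R1 4 sigma10, Jm}" unfolding R2_def R3_def by (intro gen_mult ls4)
lemma c1_4X_stab: "(R1 4 sigma10 ** R2 4 sigma10) \<in> Stab (gen_group {R1 4 sigma10, Jm}) (mirror (Hmat 4 sigma10) (mpow (R1 4 sigma10 ** R2 4 sigma10) 5))"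
  by (rule stab_lemma[OF c1_4X_mem gam4[OF c1_4X_mem] mpow_comm])


lemma c1_4D_mem: "(Jm ** matrix_inv (R1 4 sigma10) ** matrix_inv Jm ** matrix_inv (R1 4 sigma10) ** Jm ** matrix_inv (R1 4 sigma10) ** matrix_inv Jm ** matrix_inv (R1 4 sigma10) ** Jm) \<in> gen_group {R1 4 sigma10, Jm}" by (intro gen_mult ls4)
lemma c1_4D_comm: "(Jm ** matrix_inv (R1 4 sigma10) ** matrix_inv Jm ** matrix_inv (R1 4 sigma10) ** Jm ** matrix_inv (R1 4 sigma10) ** matrix_inv Jm ** matrix_inv (R1 4 sigma10) ** Jm) ** R1 4 sigma10 = R1 4 sigma10 ** (Jm ** matrix_inv (R1 4 sigma10) ** matrix_inv Jm ** matrix_inv (R1 4 sigma10) ** Jm ** matrix_inv (R1 4 sigma10) ** matrix_inv Jm ** matrix_inv (R1 4 sigma10) ** Jm)"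
  apply ((simp only: R2_def R3_def)?)
  apply (simp only: R1eq4 Jeq4 Ieq4 R1inv4 Jinv4 fold4)
  apply (rule arg_cong[where f="mev (uu 4) sigma10"])
  by code_simp

lemma c1_4D_stab: "(Jm ** matrix_inv (R1 4 sigma10) ** matrix_inv Jm ** matrix_inv (R1 4 sigma10) ** Jm ** matrix_inv (R1 4 sigma10) ** matrix_inv Jm ** matrix_inv (R1 4 sigma10) ** Jm) \<in> Stab (gen_group {R1 4 sigma10, Jm}) (mirror (Hmat 4 sigma10) (R1 4 sigma10))"
  by (rule stab_lemma[OF c1_4D_mem gam4[OF c1_4D_mem] c1_4D_comm])


lemma c1_4J: "Jm = mat 1 ** ((R1 4 sigma10 ** R2 4 sigma10) ** (R1 4 sigma10 ** R2 4 sigma10) ** (Jm ** matrix_inv (R1 4 sigma10) ** matrix_inv Jm ** matrix_inv (R1 4 sigma10) ** Jm ** matrix_inv (R1 4 sigma10) ** matrix_inv Jm ** matrix_inv (R1 4 sigma10) ** Jm))"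
  apply ((simp only: R2_def R3_def)?)
  apply (simp only: R1eq4 Jeq4 Ieq4 R1inv4 Jinv4 fold4)
  apply (rule arg_cong[where f="mev (uu 4) sigma10"])
  by code_simp

lemma c1_4: "proj_generates (gen_group {R1 4 sigma10, Jm}) (Stab (gen_group {R1 4 sigma10, Jm}) (mirror (Hmat 4 sigma10) (R1 4 sigma10)) \<union> Stab (gen_group {R1 4 sigma10, Jm}) (mirror (Hmat 4 sigma10) (mpow (R1 4 sigma10 ** R2 4 sigma10) 5)))"
  by (rule pg_lemma[OF UnI1[OF s1_4] Jinv2_4 c1_4J gen_mult[OF gen_mult[OF gen_S[OF UnI2[OF c1_4X_stab]] gen_S[OF UnI2[OF c1_4X_stab]]] gen_S[OF UnI1[OF c1_4D_stab]]] one_neq_zero])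


lemma c2_4X_mem: "(R1 4 sigma10 ** R3 4 sigma10) \<in> gen_group {R1 4 sigma10, Jm}" unfolding R2_def R3_def by (intro gen_mult ls4)
lemma c2_4X_stab: "(R1 4 sigma10 ** R3 4 sigma10) \<in> Stab (gen_group {R1 4 sigma10, Jm}) (mirror (Hmat 4 sigma10) (mpow (R1 4 sigma10 ** R3 4 sigma10) 5))"
  by (rule stab_lemma[OF c2_4X_mem gam4[OF c2_4X_mem] mpow_comm])


lemma c2_4D_mem: "(matrix_inv Jm ** matrix_inv (R1 4 sigma10) ** Jm ** matrix_inv (R1 4 sigma10) ** matrix_inv Jm ** matrix_inv (R1 4 sigma10) ** Jm ** matrix_inv (R1 4 sigma10) ** matrix_inv Jm) \<in> gen_group {R1 4 sigma10, Jm}" by (intro gen_mult ls4)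
lemma c2_4D_comm: "(matrix_inv Jm ** matrix_inv (R1 4 sigma10) ** Jm ** matrix_inv (R1 4 sigma10) ** matrix_inv Jm ** matrix_inv (R1 4 sigma10) ** Jm ** matrix_inv (R1 4 sigma10) ** matrix_inv Jm) ** R1 4 sigma10 = R1 4 sigma10 ** (matrix_inv Jm ** matrix_inv (R1 4 sigma10) ** Jm ** matrix_inv (R1 4 sigma10) ** matrix_inv Jm ** matrix_inv (R1 4 sigma10) ** Jm ** matrix_inv (R1 4 sigma10) ** matrix_inv Jm)"
  apply ((simp only: R2_def R3_def)?)
  apply (simp only: R1eq4 Jeq4 Ieq4 R1inv4 Jinv4 fold4)
  apply (rule arg_cong[where f="mev (uu 4) sigma10"])
  by code_simp

lemma c2_4D_stab: "(matrix_inv Jm ** matrix_inv (R1 4 sigma10) ** Jm ** matrix_inv (R1 4 sigma10) ** matrix_inv Jm ** matrix_inv (R1 4 sigma10) ** Jm ** matrix_inv (R1 4 sigma10) ** matrix_inv Jm) \<in> Stab (gen_group {R1 4 sigma10, Jm}) (mirror (Hmat 4 sigma10) (R1 4 sigma10))"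
  by (rule stab_lemma[OF c2_4D_mem gam4[OF c2_4D_mem] c2_4D_comm])


lemma c2_4J: "Jm = mat 1 ** ((R1 4 sigma10 ** R3 4 sigma10) ** (R1 4 sigma10 ** R3 4 sigma10) ** (matrix_inv Jm ** matrix_inv (R1 4 sigma10) ** Jm ** matrix_inv (R1 4 sigma10) ** matrix_inv Jm ** matrix_inv (R1 4 sigma10) ** Jm ** matrix_inv (R1 4 sigma10) ** matrix_inv Jm) ** (R1 4 sigma10 ** R3 4 sigma10) ** (R1 4 sigma10 ** R3 4 sigma10) ** (matrix_inv Jm ** matrix_inv (R1 4 sigma10) ** Jm ** matrix_inv (R1 4 sigma10) ** matrix_inv Jm ** matrix_inv (R1 4 sigma10) ** Jm ** matrix_inv (R1 4 sigma10) ** matrix_inv Jm))"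
  apply ((simp only: R2_def R3_def)?)
  apply (simp only: R1eq4 Jeq4 Ieq4 R1inv4 Jinv4 fold4)
  apply (rule arg_cong[where f="mev (uu 4) sigma10"])
  by code_simp

lemma c2_4: "proj_generates (gen_group {R1 4 sigma10, Jm}) (Stab (gen_group {R1 4 sigma10, Jm}) (mirror (Hmat 4 sigma10) (R1 4 sigma10)) \<union> Stab (gen_group {R1 4 sigma10, Jm}) (mirror (Hmat 4 sigma10) (mpow (R1 4 sigma10 ** R3 4 sigma10) 5)))"
  by (rule pg_lemma[OF UnI1[OF s1_4] Jinv2_4 c2_4J gen_mult[OF gen_mult[OF gen_mult[OF gen_mult[OF gen_mult[OF gen_S[OF UnI2[OF c2_4X_stab]] gen_S[OF UnI2[OF c2_4X_stab]]] gen_S[OF UnI1[OF c2_4D_stab]]] gen_S[OF UnI2[OF c2_4X_stab]]] gen_S[OF UnI2[OF c2_4X_stab]]] gen_S[OF UnI1[OF c2_4D_stab]]] one_neq_zero])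


definition r5 :: "int list" where "r5 = [-1,1,0,-1,1,-1,0,1::int]"
definition sg5 :: el where "sg5 = eadd (eadd o1 (um r5 3)) (um r5 12)"
definition R1r5 :: rm where "R1r5 = R1rep r5 (3 * 5) sg5"
definition R1ir5 :: rm where "R1ir5 = R1irep r5 (3 * 5) sg5"
definition R1ar5 :: rm where "R1ar5 = R1arep r5 (3 * 5) sg5"
definition Hr5 :: rm where "Hr5 = Hrep r5 (3 * 5) sg5"

lemma phi5: "uu 5 ^ 8 = pev (uu 5) r5"
proof -
  define x where "x = uu 5"
  have xN: "x ^ 15 = 1" unfolding x_def using uu_N[of 5] by simp
  have ne5: "x ^ 5 \<noteq> 1" unfolding x_def using uu_ne1[of 5 5] by simp
  have ne3: "x ^ 3 \<noteq> 1" unfolding x_def using uu_ne1[of 3 5] by simp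
  have id: "(x^8 - x^7 + x^5 - x^4 + x^3 - x + 1) * ((x^5 - 1) * (x^3 - 1)) = (x^15 - 1) * (x^1 - 1)" by algebra
  then have "(x^8 - x^7 + x^5 - x^4 + x^3 - x + 1) * ((x^5 - 1) * (x^3 - 1)) = 0" using xN by simp
  then have ph: "x^8 - x^7 + x^5 - x^4 + x^3 - x + 1 = 0" using ne5 ne3 by simp
  show ?thesis unfolding x_def[symmetric] r5_def using ph by simp algebra
qed

lemma fr5: "fr r5 (uu 5) sigma10"
proof -
  have l: "length r5 = 8" by (simp add: r5_def)
  show ?thesis unfolding fr_def l using phi5 sig_sq by (simp add: r5_def del: pev.simps)
qed

lemmas fold5 = fr.mev_mul[OF fr5, symmetric]

lemma sgv5: "ev (uu 5) sigma10 sg5 = sigma10"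
proof -
  have a: "ev (uu 5) sigma10 sg5 = 1 + uu 5 ^ 3 + (uu 5 ^ 3) ^ 4"
    by (simp add: sg5_def fr.ev_eadd[OF fr5] fr.ev_um[OF fr5] power_mult[symmetric])
  have z5: "(uu 5 ^ 3) ^ 5 = 1" using uu_N[of 5] by (simp add: power_mult[symmetric])
  have z1: "uu 5 ^ 3 \<noteq> 1" using uu_ne1[of 3 5] by simp
  have zc: "cnj (uu 5 ^ 3) = (uu 5 ^ 3) ^ 4" using uu_cnj[of 5 3] by (simp add: power_mult[symmetric])
  have "Re (uu 5 ^ 3) = cos (2 * pi / 5)"
    unfolding uu_pow by (simp add: Re_exp)
  moreover have "cos (2 * pi / 5) > 0" by (rule cos_gt_zero_pi) (simp_all add: divide_simps)
  ultimately have zr: "Re (uu 5 ^ 3) > 0" by simp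
  show ?thesis using a sig_from5[OF z5 z1 zr zc] by simp
qed


lemma R1eq5: "R1 5 sigma10 = mev (uu 5) sigma10 R1r5"
  unfolding R1r5_def by (rule ev_R1[OF fr5 _ sgv5]) simp
lemma Heq5: "Hmat 5 sigma10 = mev (uu 5) sigma10 Hr5"
  unfolding Hr5_def by (rule ev_H[OF fr5 _ sgv5]) simp
lemma R1aeq5: "cadj (mev (uu 5) sigma10 R1r5) = mev (uu 5) sigma10 R1ar5"
  unfolding R1eq5[symmetric] R1ar5_def by (rule ev_R1a[OF fr5 _ sgv5]) simp
lemmas Jeq5 = mev_J[of "uu 5" sigma10]
lemmas Ieq5 = mev_I[of "uu 5" sigma10]
lemmas Jaeq5 = cadj_J[of "uu 5" sigma10, unfolded Jeq5]

lemma R1inv5: "matrix_inv (mev (uu 5) sigma10 R1r5) = mev (uu 5) sigma10 R1ir5"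
  apply (rule minv_eq)
  apply (simp only: Ieq5 fold5)
  apply (rule arg_cong[where f="mev (uu 5) sigma10"])
  apply code_simp
  apply (simp only: Ieq5 fold5)
  apply (rule arg_cong[where f="mev (uu 5) sigma10"])
  by code_simp

lemma Jinv5: "matrix_inv (mev (uu 5) sigma10 Jr) = mev (uu 5) sigma10 Jir"
  apply (rule minv_eq)
  apply (simp only: Ieq5 fold5)
  apply (rule arg_cong[where f="mev (uu 5) sigma10"])
  apply code_simp
  apply (simp only: Ieq5 fold5)
  apply (rule arg_cong[where f="mev (uu 5) sigma10"])
  by code_simp

lemma uR1_5: "unitary (Hmat 5 sigma10) (R1 5 sigma10)"
  unfolding unitary_def
  apply (simp only: R1eq5 Heq5 R1aeq5 fold5)
  apply (rule arg_cong[where f="mev (uu 5) sigma10"])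
  by code_simp

lemma uJ_5: "unitary (Hmat 5 sigma10) Jm"
  unfolding unitary_def
  apply (simp only: Jeq5 Heq5 Jaeq5 fold5)
  apply (rule arg_cong[where f="mev (uu 5) sigma10"])
  by code_simp

lemma good_R1_5: "good (Hmat 5 sigma10) (R1 5 sigma10)"
proof -
  have "R1 5 sigma10 ** matrix_inv (R1 5 sigma10) = mat 1"
  apply (simp only: R1eq5 Jeq5 Ieq5 R1inv5 Jinv5 fold5)
  apply (rule arg_cong[where f="mev (uu 5) sigma10"])
  by code_simp
  moreover have "matrix_inv (R1 5 sigma10) ** R1 5 sigma10 = mat 1"
  apply (simp only: R1eq5 Jeq5 Ieq5 R1inv5 Jinv5 fold5)
  apply (rule arg_cong[where f="mev (uu 5) sigma10"])
  by code_simp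
  ultimately show ?thesis unfolding good_def using uR1_5 by blast
qed

lemma good_J_5: "good (Hmat 5 sigma10) Jm"
proof -
  have "Jm ** matrix_inv Jm = mat 1"
  apply (simp only: R1eq5 Jeq5 Ieq5 R1inv5 Jinv5 fold5)
  apply (rule arg_cong[where f="mev (uu 5) sigma10"])
  by code_simp
  moreover have "matrix_inv Jm ** Jm = mat 1"
  apply (simp only: R1eq5 Jeq5 Ieq5 R1inv5 Jinv5 fold5)
  apply (rule arg_cong[where f="mev (uu 5) sigma10"])
  by code_simp
  ultimately show ?thesis unfolding good_def using uJ_5 by blast
qed

lemmas gam5 = gamma_good[OF good_R1_5 good_J_5]

lemma l1_5: "R1 5 sigma10 \<in> gen_group {R1 5 sigma10, Jm}" by (rule gen_S) simp
lemma l2_5: "Jm \<in> gen_group {R1 5 sigma10, Jm}" by (rule gen_S) simp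
lemma l3_5: "matrix_inv (R1 5 sigma10) \<in> gen_group {R1 5 sigma10, Jm}" by (rule gen_Si) simp
lemma l4_5: "matrix_inv Jm \<in> gen_group {R1 5 sigma10, Jm}" by (rule gen_Si) simp
lemmas ls5 = l1_5 l2_5 l3_5 l4_5

lemma s1_5: "R1 5 sigma10 \<in> Stab (gen_group {R1 5 sigma10, Jm}) (mirror (Hmat 5 sigma10) (R1 5 sigma10))"
  by (rule stab_lemma[OF l1_5 gam5[OF l1_5] refl])

lemma Jinv2_5: "matrix_inv Jm = Jm ** Jm"
  apply (simp only: R1eq5 Jeq5 Ieq5 R1inv5 Jinv5 fold5)
  apply (rule arg_cong[where f="mev (uu 5) sigma10"])
  by code_simp


lemma c1_5X_mem: "(R1 5 sigma10 ** R2 5 sigma10) \<in> gen_group {R1 5 sigma10, Jm}" unfolding R2_def R3_def by (intro gen_mult ls5)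
lemma c1_5X_stab: "(R1 5 sigma10 ** R2 5 sigma10) \<in> Stab (gen_group {R1 5 sigma10, Jm}) (mirror (Hmat 5 sigma10) (mpow (R1 5 sigma10 ** R2 5 sigma10) 5))"
  by (rule stab_lemma[OF c1_5X_mem gam5[OF c1_5X_mem] mpow_comm])


lemma c1_5D_mem: "(Jm ** matrix_inv (R1 5 sigma10) ** matrix_inv Jm ** matrix_inv (R1 5 sigma10) ** Jm ** matrix_inv (R1 5 sigma10) ** matrix_inv Jm ** matrix_inv (R1 5 sigma10) ** Jm) \<in> gen_group {R1 5 sigma10, Jm}" by (intro gen_mult ls5)
lemma c1_5D_comm: "(Jm ** matrix_inv (R1 5 sigma10) ** matrix_inv Jm ** matrix_inv (R1 5 sigma10) ** Jm ** matrix_inv (R1 5 sigma10) ** matrix_inv Jm ** matrix_inv (R1 5 sigma10) ** Jm) ** R1 5 sigma10 = R1 5 sigma10 ** (Jm ** matrix_inv (R1 5 sigma10) ** matrix_inv Jm ** matrix_inv (R1 5 sigma10) ** Jm ** matrix_inv (R1 5 sigma10) ** matrix_inv Jm ** matrix_inv (R1 5 sigma10) ** Jm)"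
  apply ((simp only: R2_def R3_def)?)
  apply (simp only: R1eq5 Jeq5 Ieq5 R1inv5 Jinv5 fold5)
  apply (rule arg_cong[where f="mev (uu 5) sigma10"])
  by code_simp

lemma c1_5D_stab: "(Jm ** matrix_inv (R1 5 sigma10) ** matrix_inv Jm ** matrix_inv (R1 5 sigma10) ** Jm ** matrix_inv (R1 5 sigma10) ** matrix_inv Jm ** matrix_inv (R1 5 sigma10) ** Jm) \<in> Stab (gen_group {R1 5 sigma10, Jm}) (mirror (Hmat 5 sigma10) (R1 5 sigma10))"
  by (rule stab_lemma[OF c1_5D_mem gam5[OF c1_5D_mem] c1_5D_comm])


lemma c1_5J: "Jm = mat 1 ** ((R1 5 sigma10 ** R2 5 sigma10) ** (R1 5 sigma10 ** R2 5 sigma10) ** (Jm ** matrix_inv (R1 5 sigma10) ** matrix_inv Jm ** matrix_inv (R1 5 sigma10) ** Jm ** matrix_inv (R1 5 sigma10) ** matrix_inv Jm ** matrix_inv (R1 5 sigma10) ** Jm))"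
  apply ((simp only: R2_def R3_def)?)
  apply (simp only: R1eq5 Jeq5 Ieq5 R1inv5 Jinv5 fold5)
  apply (rule arg_cong[where f="mev (uu 5) sigma10"])
  by code_simp

lemma c1_5: "proj_generates (gen_group {R1 5 sigma10, Jm}) (Stab (gen_group {R1 5 sigma10, Jm}) (mirror (Hmat 5 sigma10) (R1 5 sigma10)) \<union> Stab (gen_group {R1 5 sigma10, Jm}) (mirror (Hmat 5 sigma10) (mpow (R1 5 sigma10 ** R2 5 sigma10) 5)))"
  by (rule pg_lemma[OF UnI1[OF s1_5] Jinv2_5 c1_5J gen_mult[OF gen_mult[OF gen_S[OF UnI2[OF c1_5X_stab]] gen_S[OF UnI2[OF c1_5X_stab]]] gen_S[OF UnI1[OF c1_5D_stab]]] one_neq_zero])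


lemma c2_5X_mem: "(R1 5 sigma10 ** R3 5 sigma10) \<in> gen_group {R1 5 sigma10, Jm}" unfolding R2_def R3_def by (intro gen_mult ls5)
lemma c2_5X_stab: "(R1 5 sigma10 ** R3 5 sigma10) \<in> Stab (gen_group {R1 5 sigma10, Jm}) (mirror (Hmat 5 sigma10) (mpow (R1 5 sigma10 ** R3 5 sigma10) 5))"
  by (rule stab_lemma[OF c2_5X_mem gam5[OF c2_5X_mem] mpow_comm])


lemma c2_5D_mem: "(matrix_inv Jm ** matrix_inv (R1 5 sigma10) ** Jm ** matrix_inv (R1 5 sigma10) ** matrix_inv Jm ** matrix_inv (R1 5 sigma10) ** Jm ** matrix_inv (R1 5 sigma10) ** matrix_inv Jm) \<in> gen_group {R1 5 sigma10, Jm}" by (intro gen_mult ls5)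
lemma c2_5D_comm: "(matrix_inv Jm ** matrix_inv (R1 5 sigma10) ** Jm ** matrix_inv (R1 5 sigma10) ** matrix_inv Jm ** matrix_inv (R1 5 sigma10) ** Jm ** matrix_inv (R1 5 sigma10) ** matrix_inv Jm) ** R1 5 sigma10 = R1 5 sigma10 ** (matrix_inv Jm ** matrix_inv (R1 5 sigma10) ** Jm ** matrix_inv (R1 5 sigma10) ** matrix_inv Jm ** matrix_inv (R1 5 sigma10) ** Jm ** matrix_inv (R1 5 sigma10) ** matrix_inv Jm)"
  apply ((simp only: R2_def R3_def)?)
  apply (simp only: R1eq5 Jeq5 Ieq5 R1inv5 Jinv5 fold5)
  apply (rule arg_cong[where f="mev (uu 5) sigma10"])
  by code_simp

lemma c2_5D_stab: "(matrix_inv Jm ** matrix_inv (R1 5 sigma10) ** Jm ** matrix_inv (R1 5 sigma10) ** matrix_inv Jm ** matrix_inv (R1 5 sigma10) ** Jm ** matrix_inv (R1 5 sigma10) ** matrix_inv Jm) \<in> Stab (gen_group {R1 5 sigma10, Jm}) (mirror (Hmat 5 sigma10) (R1 5 sigma10))"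
  by (rule stab_lemma[OF c2_5D_mem gam5[OF c2_5D_mem] c2_5D_comm])


lemma c2_5J: "Jm = mat 1 ** ((R1 5 sigma10 ** R3 5 sigma10) ** (R1 5 sigma10 ** R3 5 sigma10) ** (matrix_inv Jm ** matrix_inv (R1 5 sigma10) ** Jm ** matrix_inv (R1 5 sigma10) ** matrix_inv Jm ** matrix_inv (R1 5 sigma10) ** Jm ** matrix_inv (R1 5 sigma10) ** matrix_inv Jm) ** (R1 5 sigma10 ** R3 5 sigma10) ** (R1 5 sigma10 ** R3 5 sigma10) ** (matrix_inv Jm ** matrix_inv (R1 5 sigma10) ** Jm ** matrix_inv (R1 5 sigma10) ** matrix_inv Jm ** matrix_inv (R1 5 sigma10) ** Jm ** matrix_inv (R1 5 sigma10) ** matrix_inv Jm))"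
  apply ((simp only: R2_def R3_def)?)
  apply (simp only: R1eq5 Jeq5 Ieq5 R1inv5 Jinv5 fold5)
  apply (rule arg_cong[where f="mev (uu 5) sigma10"])
  by code_simp

lemma c2_5: "proj_generates (gen_group {R1 5 sigma10, Jm}) (Stab (gen_group {R1 5 sigma10, Jm}) (mirror (Hmat 5 sigma10) (R1 5 sigma10)) \<union> Stab (gen_group {R1 5 sigma10, Jm}) (mirror (Hmat 5 sigma10) (mpow (R1 5 sigma10 ** R3 5 sigma10) 5)))"
  by (rule pg_lemma[OF UnI1[OF s1_5] Jinv2_5 c2_5J gen_mult[OF gen_mult[OF gen_mult[OF gen_mult[OF gen_mult[OF gen_S[OF UnI2[OF c2_5X_stab]] gen_S[OF UnI2[OF c2_5X_stab]]] gen_S[OF UnI1[OF c2_5D_stab]]] gen_S[OF UnI2[OF c2_5X_stab]]] gen_S[OF UnI2[OF c2_5X_stab]]] gen_S[OF UnI1[OF c2_5D_stab]]] one_neq_zero])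


definition r10 :: "int list" where "r10 = [-1,-1,0,1,1,1,0,-1::int]"
definition sg10 :: el where "sg10 = eadd (eadd o1 (um r10 6)) (um r10 24)"
definition R1r10 :: rm where "R1r10 = R1rep r10 (3 * 10) sg10"
definition R1ir10 :: rm where "R1ir10 = R1irep r10 (3 * 10) sg10"
definition R1ar10 :: rm where "R1ar10 = R1arep r10 (3 * 10) sg10"
definition Hr10 :: rm where "Hr10 = Hrep r10 (3 * 10) sg10"

lemma phi10: "uu 10 ^ 8 = pev (uu 10) r10"
proof -
  define x where "x = uu 10"
  have xN: "x ^ 30 = 1" unfolding x_def using uu_N[of 10] by simp
  have ne15: "x ^ 15 \<noteq> 1" unfolding x_def using uu_ne1[of 15 10] by simp
  have ne10: "x ^ 10 \<noteq> 1" unfolding x_def using uu_ne1[of 10 10] by simp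
  have ne6: "x ^ 6 \<noteq> 1" unfolding x_def using uu_ne1[of 6 10] by simp
  have ne1: "x ^ 1 \<noteq> 1" unfolding x_def using uu_ne1[of 1 10] by simp
  have id: "(x^8 + x^7 - x^5 - x^4 - x^3 + x + 1) * ((x^15 - 1) * (x^10 - 1) * (x^6 - 1) * (x^1 - 1)) = (x^30 - 1) * (x^3 - 1) * (x^5 - 1) * (x^2 - 1)" by algebra
  then have "(x^8 + x^7 - x^5 - x^4 - x^3 + x + 1) * ((x^15 - 1) * (x^10 - 1) * (x^6 - 1) * (x^1 - 1)) = 0" using xN by simp
  then have ph: "x^8 + x^7 - x^5 - x^4 - x^3 + x + 1 = 0" using ne15 ne10 ne6 ne1 by simp
  show ?thesis unfolding x_def[symmetric] r10_def using ph by simp algebra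
qed

lemma fr10: "fr r10 (uu 10) sigma10"
proof -
  have l: "length r10 = 8" by (simp add: r10_def)
  show ?thesis unfolding fr_def l using phi10 sig_sq by (simp add: r10_def del: pev.simps)
qed

lemmas fold10 = fr.mev_mul[OF fr10, symmetric]

lemma sgv10: "ev (uu 10) sigma10 sg10 = sigma10"
proof -
  have a: "ev (uu 10) sigma10 sg10 = 1 + uu 10 ^ 6 + (uu 10 ^ 6) ^ 4"
    by (simp add: sg10_def fr.ev_eadd[OF fr10] fr.ev_um[OF fr10] power_mult[symmetric])
  have z5: "(uu 10 ^ 6) ^ 5 = 1" using uu_N[of 10] by (simp add: power_mult[symmetric])
  have z1: "uu 10 ^ 6 \<noteq> 1" using uu_ne1[of 6 10] by simp
  have zc: "cnj (uu 10 ^ 6) = (uu 10 ^ 6) ^ 4" using uu_cnj[of 10 6] by (simp add: power_mult[symmetric])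
  have "Re (uu 10 ^ 6) = cos (2 * pi / 5)"
    unfolding uu_pow by (simp add: Re_exp)
  moreover have "cos (2 * pi / 5) > 0" by (rule cos_gt_zero_pi) (simp_all add: divide_simps)
  ultimately have zr: "Re (uu 10 ^ 6) > 0" by simp
  show ?thesis using a sig_from5[OF z5 z1 zr zc] by simp
qed


lemma R1eq10: "R1 10 sigma10 = mev (uu 10) sigma10 R1r10"
  unfolding R1r10_def by (rule ev_R1[OF fr10 _ sgv10]) simp
lemma Heq10: "Hmat 10 sigma10 = mev (uu 10) sigma10 Hr10"
  unfolding Hr10_def by (rule ev_H[OF fr10 _ sgv10]) simp
lemma R1aeq10: "cadj (mev (uu 10) sigma10 R1r10) = mev (uu 10) sigma10 R1ar10"
  unfolding R1eq10[symmetric] R1ar10_def by (rule ev_R1a[OF fr10 _ sgv10]) simp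
lemmas Jeq10 = mev_J[of "uu 10" sigma10]
lemmas Ieq10 = mev_I[of "uu 10" sigma10]
lemmas Jaeq10 = cadj_J[of "uu 10" sigma10, unfolded Jeq10]

lemma R1inv10: "matrix_inv (mev (uu 10) sigma10 R1r10) = mev (uu 10) sigma10 R1ir10"
  apply (rule minv_eq)
  apply (simp only: Ieq10 fold10)
  apply (rule arg_cong[where f="mev (uu 10) sigma10"])
  apply code_simp
  apply (simp only: Ieq10 fold10)
  apply (rule arg_cong[where f="mev (uu 10) sigma10"])
  by code_simp

lemma Jinv10: "matrix_inv (mev (uu 10) sigma10 Jr) = mev (uu 10) sigma10 Jir"
  apply (rule minv_eq)
  apply (simp only: Ieq10 fold10)
  apply (rule arg_cong[where f="mev (uu 10) sigma10"])
  apply code_simp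
  apply (simp only: Ieq10 fold10)
  apply (rule arg_cong[where f="mev (uu 10) sigma10"])
  by code_simp

lemma uR1_10: "unitary (Hmat 10 sigma10) (R1 10 sigma10)"
  unfolding unitary_def
  apply (simp only: R1eq10 Heq10 R1aeq10 fold10)
  apply (rule arg_cong[where f="mev (uu 10) sigma10"])
  by code_simp

lemma uJ_10: "unitary (Hmat 10 sigma10) Jm"
  unfolding unitary_def
  apply (simp only: Jeq10 Heq10 Jaeq10 fold10)
  apply (rule arg_cong[where f="mev (uu 10) sigma10"])
  by code_simp

lemma good_R1_10: "good (Hmat 10 sigma10) (R1 10 sigma10)"
proof -
  have "R1 10 sigma10 ** matrix_inv (R1 10 sigma10) = mat 1"
  apply (simp only: R1eq10 Jeq10 Ieq10 R1inv10 Jinv10 fold10)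
  apply (rule arg_cong[where f="mev (uu 10) sigma10"])
  by code_simp
  moreover have "matrix_inv (R1 10 sigma10) ** R1 10 sigma10 = mat 1"
  apply (simp only: R1eq10 Jeq10 Ieq10 R1inv10 Jinv10 fold10)
  apply (rule arg_cong[where f="mev (uu 10) sigma10"])
  by code_simp
  ultimately show ?thesis unfolding good_def using uR1_10 by blast
qed

lemma good_J_10: "good (Hmat 10 sigma10) Jm"
proof -
  have "Jm ** matrix_inv Jm = mat 1"
  apply (simp only: R1eq10 Jeq10 Ieq10 R1inv10 Jinv10 fold10)
  apply (rule arg_cong[where f="mev (uu 10) sigma10"])
  by code_simp
  moreover have "matrix_inv Jm ** Jm = mat 1"
  apply (simp only: R1eq10 Jeq10 Ieq10 R1inv10 Jinv10 fold10)
  apply (rule arg_cong[where f="mev (uu 10) sigma10"])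
  by code_simp
  ultimately show ?thesis unfolding good_def using uJ_10 by blast
qed

lemmas gam10 = gamma_good[OF good_R1_10 good_J_10]

lemma l1_10: "R1 10 sigma10 \<in> gen_group {R1 10 sigma10, Jm}" by (rule gen_S) simp
lemma l2_10: "Jm \<in> gen_group {R1 10 sigma10, Jm}" by (rule gen_S) simp
lemma l3_10: "matrix_inv (R1 10 sigma10) \<in> gen_group {R1 10 sigma10, Jm}" by (rule gen_Si) simp
lemma l4_10: "matrix_inv Jm \<in> gen_group {R1 10 sigma10, Jm}" by (rule gen_Si) simp
lemmas ls10 = l1_10 l2_10 l3_10 l4_10

lemma s1_10: "R1 10 sigma10 \<in> Stab (gen_group {R1 10 sigma10, Jm}) (mirror (Hmat 10 sigma10) (R1 10 sigma10))"
  by (rule stab_lemma[OF l1_10 gam10[OF l1_10] refl])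

lemma Jinv2_10: "matrix_inv Jm = Jm ** Jm"
  apply (simp only: R1eq10 Jeq10 Ieq10 R1inv10 Jinv10 fold10)
  apply (rule arg_cong[where f="mev (uu 10) sigma10"])
  by code_simp


lemma c1_10X_mem: "(R1 10 sigma10 ** R2 10 sigma10) \<in> gen_group {R1 10 sigma10, Jm}" unfolding R2_def R3_def by (intro gen_mult ls10)
lemma c1_10X_stab: "(R1 10 sigma10 ** R2 10 sigma10) \<in> Stab (gen_group {R1 10 sigma10, Jm}) (mirror (Hmat 10 sigma10) (mpow (R1 10 sigma10 ** R2 10 sigma10) 5))"
  by (rule stab_lemma[OF c1_10X_mem gam10[OF c1_10X_mem] mpow_comm])


lemma c1_10D_mem: "(Jm ** matrix_inv (R1 10 sigma10) ** matrix_inv Jm ** matrix_inv (R1 10 sigma10) ** Jm ** matrix_inv (R1 10 sigma10) ** matrix_inv Jm ** matrix_inv (R1 10 sigma10) ** Jm) \<in> gen_group {R1 10 sigma10, Jm}" by (intro gen_mult ls10)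
lemma c1_10D_comm: "(Jm ** matrix_inv (R1 10 sigma10) ** matrix_inv Jm ** matrix_inv (R1 10 sigma10) ** Jm ** matrix_inv (R1 10 sigma10) ** matrix_inv Jm ** matrix_inv (R1 10 sigma10) ** Jm) ** R1 10 sigma10 = R1 10 sigma10 ** (Jm ** matrix_inv (R1 10 sigma10) ** matrix_inv Jm ** matrix_inv (R1 10 sigma10) ** Jm ** matrix_inv (R1 10 sigma10) ** matrix_inv Jm ** matrix_inv (R1 10 sigma10) ** Jm)"
  apply ((simp only: R2_def R3_def)?)
  apply (simp only: R1eq10 Jeq10 Ieq10 R1inv10 Jinv10 fold10)
  apply (rule arg_cong[where f="mev (uu 10) sigma10"])
  by code_simp

lemma c1_10D_stab: "(Jm ** matrix_inv (R1 10 sigma10) ** matrix_inv Jm ** matrix_inv (R1 10 sigma10) ** Jm ** matrix_inv (R1 10 sigma10) ** matrix_inv Jm ** matrix_inv (R1 10 sigma10) ** Jm) \<in> Stab (gen_group {R1 10 sigma10, Jm}) (mirror (Hmat 10 sigma10) (R1 10 sigma10))"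
  by (rule stab_lemma[OF c1_10D_mem gam10[OF c1_10D_mem] c1_10D_comm])


lemma c1_10J: "Jm = mat 1 ** ((R1 10 sigma10 ** R2 10 sigma10) ** (R1 10 sigma10 ** R2 10 sigma10) ** (Jm ** matrix_inv (R1 10 sigma10) ** matrix_inv Jm ** matrix_inv (R1 10 sigma10) ** Jm ** matrix_inv (R1 10 sigma10) ** matrix_inv Jm ** matrix_inv (R1 10 sigma10) ** Jm))"
  apply ((simp only: R2_def R3_def)?)
  apply (simp only: R1eq10 Jeq10 Ieq10 R1inv10 Jinv10 fold10)
  apply (rule arg_cong[where f="mev (uu 10) sigma10"])
  by code_simp

lemma c1_10: "proj_generates (gen_group {R1 10 sigma10, Jm}) (Stab (gen_group {R1 10 sigma10, Jm}) (mirror (Hmat 10 sigma10) (R1 10 sigma10)) \<union> Stab (gen_group {R1 10 sigma10, Jm}) (mirror (Hmat 10 sigma10) (mpow (R1 10 sigma10 ** R2 10 sigma10) 5)))"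
  by (rule pg_lemma[OF UnI1[OF s1_10] Jinv2_10 c1_10J gen_mult[OF gen_mult[OF gen_S[OF UnI2[OF c1_10X_stab]] gen_S[OF UnI2[OF c1_10X_stab]]] gen_S[OF UnI1[OF c1_10D_stab]]] one_neq_zero])


lemma c2_10X_mem: "(R1 10 sigma10 ** R3 10 sigma10) \<in> gen_group {R1 10 sigma10, Jm}" unfolding R2_def R3_def by (intro gen_mult ls10)
lemma c2_10X_stab: "(R1 10 sigma10 ** R3 10 sigma10) \<in> Stab (gen_group {R1 10 sigma10, Jm}) (mirror (Hmat 10 sigma10) (mpow (R1 10 sigma10 ** R3 10 sigma10) 5))"
  by (rule stab_lemma[OF c2_10X_mem gam10[OF c2_10X_mem] mpow_comm])


lemma c2_10D_mem: "(matrix_inv Jm ** matrix_inv (R1 10 sigma10) ** Jm ** matrix_inv (R1 10 sigma10) ** matrix_inv Jm ** matrix_inv (R1 10 sigma10) ** Jm ** matrix_inv (R1 10 sigma10) ** matrix_inv Jm) \<in> gen_group {R1 10 sigma10, Jm}" by (intro gen_mult ls10)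
lemma c2_10D_comm: "(matrix_inv Jm ** matrix_inv (R1 10 sigma10) ** Jm ** matrix_inv (R1 10 sigma10) ** matrix_inv Jm ** matrix_inv (R1 10 sigma10) ** Jm ** matrix_inv (R1 10 sigma10) ** matrix_inv Jm) ** R1 10 sigma10 = R1 10 sigma10 ** (matrix_inv Jm ** matrix_inv (R1 10 sigma10) ** Jm ** matrix_inv (R1 10 sigma10) ** matrix_inv Jm ** matrix_inv (R1 10 sigma10) ** Jm ** matrix_inv (R1 10 sigma10) ** matrix_inv Jm)"
  apply ((simp only: R2_def R3_def)?)
  apply (simp only: R1eq10 Jeq10 Ieq10 R1inv10 Jinv10 fold10)
  apply (rule arg_cong[where f="mev (uu 10) sigma10"])
  by code_simp

lemma c2_10D_stab: "(matrix_inv Jm ** matrix_inv (R1 10 sigma10) ** Jm ** matrix_inv (R1 10 sigma10) ** matrix_inv Jm ** matrix_inv (R1 10 sigma10) ** Jm ** matrix_inv (R1 10 sigma10) ** matrix_inv Jm) \<in> Stab (gen_group {R1 10 sigma10, Jm}) (mirror (Hmat 10 sigma10) (R1 10 sigma10))"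
  by (rule stab_lemma[OF c2_10D_mem gam10[OF c2_10D_mem] c2_10D_comm])


lemma c2_10J: "Jm = mat 1 ** ((R1 10 sigma10 ** R3 10 sigma10) ** (R1 10 sigma10 ** R3 10 sigma10) ** (matrix_inv Jm ** matrix_inv (R1 10 sigma10) ** Jm ** matrix_inv (R1 10 sigma10) ** matrix_inv Jm ** matrix_inv (R1 10 sigma10) ** Jm ** matrix_inv (R1 10 sigma10) ** matrix_inv Jm) ** (R1 10 sigma10 ** R3 10 sigma10) ** (R1 10 sigma10 ** R3 10 sigma10) ** (matrix_inv Jm ** matrix_inv (R1 10 sigma10) ** Jm ** matrix_inv (R1 10 sigma10) ** matrix_inv Jm ** matrix_inv (R1 10 sigma10) ** Jm ** matrix_inv (R1 10 sigma10) ** matrix_inv Jm))"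
  apply ((simp only: R2_def R3_def)?)
  apply (simp only: R1eq10 Jeq10 Ieq10 R1inv10 Jinv10 fold10)
  apply (rule arg_cong[where f="mev (uu 10) sigma10"])
  by code_simp

lemma c2_10: "proj_generates (gen_group {R1 10 sigma10, Jm}) (Stab (gen_group {R1 10 sigma10, Jm}) (mirror (Hmat 10 sigma10) (R1 10 sigma10)) \<union> Stab (gen_group {R1 10 sigma10, Jm}) (mirror (Hmat 10 sigma10) (mpow (R1 10 sigma10 ** R3 10 sigma10) 5)))"
  by (rule pg_lemma[OF UnI1[OF s1_10] Jinv2_10 c2_10J gen_mult[OF gen_mult[OF gen_mult[OF gen_mult[OF gen_mult[OF gen_S[OF UnI2[OF c2_10X_stab]] gen_S[OF UnI2[OF c2_10X_stab]]] gen_S[OF UnI1[OF c2_10D_stab]]] gen_S[OF UnI2[OF c2_10X_stab]]] gen_S[OF UnI2[OF c2_10X_stab]]] gen_S[OF UnI1[OF c2_10D_stab]]] one_neq_zero])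


lemma invR2_10: "matrix_inv (Jm ** R1 10 sigma10 ** matrix_inv Jm) = Jm ** matrix_inv (R1 10 sigma10) ** matrix_inv Jm"
  apply (rule minv_eq)
  apply (simp only: R1eq10 Jeq10 Ieq10 R1inv10 Jinv10 fold10)
  apply (rule arg_cong[where f="mev (uu 10) sigma10"])
  apply code_simp
  apply (simp only: R1eq10 Jeq10 Ieq10 R1inv10 Jinv10 fold10)
  apply (rule arg_cong[where f="mev (uu 10) sigma10"])
  by code_simp
lemma invR3_10: "matrix_inv (Jm ** (Jm ** R1 10 sigma10 ** matrix_inv Jm) ** matrix_inv Jm) = Jm ** Jm ** matrix_inv (R1 10 sigma10) ** matrix_inv Jm ** matrix_inv Jm"
  apply (rule minv_eq)
  apply (simp only: R1eq10 Jeq10 Ieq10 R1inv10 Jinv10 fold10)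
  apply (rule arg_cong[where f="mev (uu 10) sigma10"])
  apply code_simp
  apply (simp only: R1eq10 Jeq10 Ieq10 R1inv10 Jinv10 fold10)
  apply (rule arg_cong[where f="mev (uu 10) sigma10"])
  by code_simp
lemma sc10: "mat (- (uu 10 ^ 25)) = mev (uu 10) sigma10 (scr (eneg (um r10 25)))"
  using mev_sc[of "uu 10" sigma10 "eneg (um r10 25)"] by (simp add: fr.ev_eneg[OF fr10] fr.ev_um[OF fr10])


lemma c3_10F0_mem: "(Jm ** R1 10 sigma10 ** Jm ** R1 10 sigma10 ** matrix_inv Jm ** R1 10 sigma10 ** Jm ** matrix_inv (R1 10 sigma10) ** matrix_inv Jm ** matrix_inv (R1 10 sigma10) ** matrix_inv Jm) \<in> gen_group {R1 10 sigma10, Jm}" by (intro gen_mult ls10)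
lemma c3_10F0_comm: "(Jm ** R1 10 sigma10 ** Jm ** R1 10 sigma10 ** matrix_inv Jm ** R1 10 sigma10 ** Jm ** matrix_inv (R1 10 sigma10) ** matrix_inv Jm ** matrix_inv (R1 10 sigma10) ** matrix_inv Jm) ** R1 10 sigma10 = R1 10 sigma10 ** (Jm ** R1 10 sigma10 ** Jm ** R1 10 sigma10 ** matrix_inv Jm ** R1 10 sigma10 ** Jm ** matrix_inv (R1 10 sigma10) ** matrix_inv Jm ** matrix_inv (R1 10 sigma10) ** matrix_inv Jm)"
  apply ((simp only: R2_def R3_def mpow3 invR2_10 invR3_10)?)
  apply (simp only: R1eq10 Jeq10 Ieq10 R1inv10 Jinv10 fold10)
  apply (rule arg_cong[where f="mev (uu 10) sigma10"])
  by code_simp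

lemma c3_10F0_stab: "(Jm ** R1 10 sigma10 ** Jm ** R1 10 sigma10 ** matrix_inv Jm ** R1 10 sigma10 ** Jm ** matrix_inv (R1 10 sigma10) ** matrix_inv Jm ** matrix_inv (R1 10 sigma10) ** matrix_inv Jm) \<in> Stab (gen_group {R1 10 sigma10, Jm}) (mirror (Hmat 10 sigma10) (R1 10 sigma10))"
  by (rule stab_lemma[OF c3_10F0_mem gam10[OF c3_10F0_mem] c3_10F0_comm])


lemma c3_10F1_mem: "(Jm ** R1 10 sigma10 ** Jm ** R1 10 sigma10 ** matrix_inv Jm ** matrix_inv (R1 10 sigma10) ** matrix_inv Jm) \<in> gen_group {R1 10 sigma10, Jm}" by (intro gen_mult ls10)
lemma c3_10F1_comm: "(Jm ** R1 10 sigma10 ** Jm ** R1 10 sigma10 ** matrix_inv Jm ** matrix_inv (R1 10 sigma10) ** matrix_inv Jm) ** mpow (R1 10 sigma10 ** R2 10 sigma10 ** R3 10 sigma10 ** matrix_inv (R2 10 sigma10)) 3 = mpow (R1 10 sigma10 ** R2 10 sigma10 ** R3 10 sigma10 ** matrix_inv (R2 10 sigma10)) 3 ** (Jm ** R1 10 sigma10 ** Jm ** R1 10 sigma10 ** matrix_inv Jm ** matrix_inv (R1 10 sigma10) ** matrix_inv Jm)"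
  apply ((simp only: R2_def R3_def mpow3 invR2_10 invR3_10)?)
  apply (simp only: R1eq10 Jeq10 Ieq10 R1inv10 Jinv10 fold10)
  apply (rule arg_cong[where f="mev (uu 10) sigma10"])
  by code_simp

lemma c3_10F1_stab: "(Jm ** R1 10 sigma10 ** Jm ** R1 10 sigma10 ** matrix_inv Jm ** matrix_inv (R1 10 sigma10) ** matrix_inv Jm) \<in> Stab (gen_group {R1 10 sigma10, Jm}) (mirror (Hmat 10 sigma10) (mpow (R1 10 sigma10 ** R2 10 sigma10 ** R3 10 sigma10 ** matrix_inv (R2 10 sigma10)) 3))"
  by (rule stab_lemma[OF c3_10F1_mem gam10[OF c3_10F1_mem] c3_10F1_comm])


lemma c3_10F2_mem: "(Jm ** matrix_inv (R1 10 sigma10) ** matrix_inv Jm ** matrix_inv (R1 10 sigma10) ** matrix_inv Jm ** matrix_inv (R1 10 sigma10) ** Jm ** R1 10 sigma10 ** Jm ** R1 10 sigma10 ** matrix_inv Jm) \<in> gen_group {R1 10 sigma10, Jm}" by (intro gen_mult ls10)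
lemma c3_10F2_comm: "(Jm ** matrix_inv (R1 10 sigma10) ** matrix_inv Jm ** matrix_inv (R1 10 sigma10) ** matrix_inv Jm ** matrix_inv (R1 10 sigma10) ** Jm ** R1 10 sigma10 ** Jm ** R1 10 sigma10 ** matrix_inv Jm) ** R1 10 sigma10 = R1 10 sigma10 ** (Jm ** matrix_inv (R1 10 sigma10) ** matrix_inv Jm ** matrix_inv (R1 10 sigma10) ** matrix_inv Jm ** matrix_inv (R1 10 sigma10) ** Jm ** R1 10 sigma10 ** Jm ** R1 10 sigma10 ** matrix_inv Jm)"
  apply ((simp only: R2_def R3_def mpow3 invR2_10 invR3_10)?)
  apply (simp only: R1eq10 Jeq10 Ieq10 R1inv10 Jinv10 fold10)
  apply (rule arg_cong[where f="mev (uu 10) sigma10"])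
  by code_simp

lemma c3_10F2_stab: "(Jm ** matrix_inv (R1 10 sigma10) ** matrix_inv Jm ** matrix_inv (R1 10 sigma10) ** matrix_inv Jm ** matrix_inv (R1 10 sigma10) ** Jm ** R1 10 sigma10 ** Jm ** R1 10 sigma10 ** matrix_inv Jm) \<in> Stab (gen_group {R1 10 sigma10, Jm}) (mirror (Hmat 10 sigma10) (R1 10 sigma10))"
  by (rule stab_lemma[OF c3_10F2_mem gam10[OF c3_10F2_mem] c3_10F2_comm])


lemma c3_10F3_mem: "(R1 10 sigma10 ** R1 10 sigma10 ** Jm ** R1 10 sigma10 ** Jm ** matrix_inv (R1 10 sigma10) ** matrix_inv Jm ** matrix_inv (R1 10 sigma10) ** matrix_inv Jm ** matrix_inv (R1 10 sigma10) ** matrix_inv (R1 10 sigma10)) \<in> gen_group {R1 10 sigma10, Jm}" by (intro gen_mult ls10)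
lemma c3_10F3_comm: "(R1 10 sigma10 ** R1 10 sigma10 ** Jm ** R1 10 sigma10 ** Jm ** matrix_inv (R1 10 sigma10) ** matrix_inv Jm ** matrix_inv (R1 10 sigma10) ** matrix_inv Jm ** matrix_inv (R1 10 sigma10) ** matrix_inv (R1 10 sigma10)) ** mpow (R1 10 sigma10 ** R2 10 sigma10 ** R3 10 sigma10 ** matrix_inv (R2 10 sigma10)) 3 = mpow (R1 10 sigma10 ** R2 10 sigma10 ** R3 10 sigma10 ** matrix_inv (R2 10 sigma10)) 3 ** (R1 10 sigma10 ** R1 10 sigma10 ** Jm ** R1 10 sigma10 ** Jm ** matrix_inv (R1 10 sigma10) ** matrix_inv Jm ** matrix_inv (R1 10 sigma10) ** matrix_inv Jm ** matrix_inv (R1 10 sigma10) ** matrix_inv (R1 10 sigma10))"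
  apply ((simp only: R2_def R3_def mpow3 invR2_10 invR3_10)?)
  apply (simp only: R1eq10 Jeq10 Ieq10 R1inv10 Jinv10 fold10)
  apply (rule arg_cong[where f="mev (uu 10) sigma10"])
  by code_simp

lemma c3_10F3_stab: "(R1 10 sigma10 ** R1 10 sigma10 ** Jm ** R1 10 sigma10 ** Jm ** matrix_inv (R1 10 sigma10) ** matrix_inv Jm ** matrix_inv (R1 10 sigma10) ** matrix_inv Jm ** matrix_inv (R1 10 sigma10) ** matrix_inv (R1 10 sigma10)) \<in> Stab (gen_group {R1 10 sigma10, Jm}) (mirror (Hmat 10 sigma10) (mpow (R1 10 sigma10 ** R2 10 sigma10 ** R3 10 sigma10 ** matrix_inv (R2 10 sigma10)) 3))"
  by (rule stab_lemma[OF c3_10F3_mem gam10[OF c3_10F3_mem] c3_10F3_comm])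


lemma c3_10J: "Jm = mat (- (uu 10 ^ 25)) ** ((Jm ** R1 10 sigma10 ** Jm ** R1 10 sigma10 ** matrix_inv Jm ** R1 10 sigma10 ** Jm ** matrix_inv (R1 10 sigma10) ** matrix_inv Jm ** matrix_inv (R1 10 sigma10) ** matrix_inv Jm) ** (Jm ** R1 10 sigma10 ** Jm ** R1 10 sigma10 ** matrix_inv Jm ** matrix_inv (R1 10 sigma10) ** matrix_inv Jm) ** (Jm ** matrix_inv (R1 10 sigma10) ** matrix_inv Jm ** matrix_inv (R1 10 sigma10) ** matrix_inv Jm ** matrix_inv (R1 10 sigma10) ** Jm ** R1 10 sigma10 ** Jm ** R1 10 sigma10 ** matrix_inv Jm) ** (R1 10 sigma10 ** R1 10 sigma10 ** Jm ** R1 10 sigma10 ** Jm ** matrix_inv (R1 10 sigma10) ** matrix_inv Jm ** matrix_inv (R1 10 sigma10) ** matrix_inv Jm ** matrix_inv (R1 10 sigma10) ** matrix_inv (R1 10 sigma10)))"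
  apply (simp only: sc10)
  apply (simp only: R1eq10 Jeq10 Ieq10 R1inv10 Jinv10 fold10)
  apply (rule arg_cong[where f="mev (uu 10) sigma10"])
  by code_simp

lemma c3_10: "proj_generates (gen_group {R1 10 sigma10, Jm}) (Stab (gen_group {R1 10 sigma10, Jm}) (mirror (Hmat 10 sigma10) (R1 10 sigma10)) \<union> Stab (gen_group {R1 10 sigma10, Jm}) (mirror (Hmat 10 sigma10) (mpow (R1 10 sigma10 ** R2 10 sigma10 ** R3 10 sigma10 ** matrix_inv (R2 10 sigma10)) 3)))"
  apply (rule pg_lemma[OF UnI1[OF s1_10] Jinv2_10 c3_10J gen_mult[OF gen_mult[OF gen_mult[OF gen_S[OF UnI1[OF c3_10F0_stab]] gen_S[OF UnI2[OF c3_10F1_stab]]] gen_S[OF UnI1[OF c3_10F2_stab]]] gen_S[OF UnI2[OF c3_10F3_stab]]]])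
  by (simp add: uu_nz)


lemma c4_10F0_mem: "(matrix_inv Jm ** matrix_inv (R1 10 sigma10) ** matrix_inv Jm ** R1 10 sigma10 ** Jm ** R1 10 sigma10 ** Jm) \<in> gen_group {R1 10 sigma10, Jm}" by (intro gen_mult ls10)
lemma c4_10F0_comm: "(matrix_inv Jm ** matrix_inv (R1 10 sigma10) ** matrix_inv Jm ** R1 10 sigma10 ** Jm ** R1 10 sigma10 ** Jm) ** mpow (R1 10 sigma10 ** matrix_inv (R3 10 sigma10) ** R2 10 sigma10 ** R3 10 sigma10) 3 = mpow (R1 10 sigma10 ** matrix_inv (R3 10 sigma10) ** R2 10 sigma10 ** R3 10 sigma10) 3 ** (matrix_inv Jm ** matrix_inv (R1 10 sigma10) ** matrix_inv Jm ** R1 10 sigma10 ** Jm ** R1 10 sigma10 ** Jm)"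
  apply ((simp only: R2_def R3_def mpow3 invR2_10 invR3_10)?)
  apply (simp only: R1eq10 Jeq10 Ieq10 R1inv10 Jinv10 fold10)
  apply (rule arg_cong[where f="mev (uu 10) sigma10"])
  by code_simp

lemma c4_10F0_stab: "(matrix_inv Jm ** matrix_inv (R1 10 sigma10) ** matrix_inv Jm ** R1 10 sigma10 ** Jm ** R1 10 sigma10 ** Jm) \<in> Stab (gen_group {R1 10 sigma10, Jm}) (mirror (Hmat 10 sigma10) (mpow (R1 10 sigma10 ** matrix_inv (R3 10 sigma10) ** R2 10 sigma10 ** R3 10 sigma10) 3))"
  by (rule stab_lemma[OF c4_10F0_mem gam10[OF c4_10F0_mem] c4_10F0_comm])


lemma c4_10F1_mem: "(Jm ** R1 10 sigma10 ** Jm ** R1 10 sigma10 ** matrix_inv Jm ** R1 10 sigma10 ** Jm ** matrix_inv (R1 10 sigma10) ** matrix_inv Jm ** matrix_inv (R1 10 sigma10) ** matrix_inv Jm) \<in> gen_group {R1 10 sigma10, Jm}" by (intro gen_mult ls10)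
lemma c4_10F1_comm: "(Jm ** R1 10 sigma10 ** Jm ** R1 10 sigma10 ** matrix_inv Jm ** R1 10 sigma10 ** Jm ** matrix_inv (R1 10 sigma10) ** matrix_inv Jm ** matrix_inv (R1 10 sigma10) ** matrix_inv Jm) ** R1 10 sigma10 = R1 10 sigma10 ** (Jm ** R1 10 sigma10 ** Jm ** R1 10 sigma10 ** matrix_inv Jm ** R1 10 sigma10 ** Jm ** matrix_inv (R1 10 sigma10) ** matrix_inv Jm ** matrix_inv (R1 10 sigma10) ** matrix_inv Jm)"
  apply ((simp only: R2_def R3_def mpow3 invR2_10 invR3_10)?)
  apply (simp only: R1eq10 Jeq10 Ieq10 R1inv10 Jinv10 fold10)
  apply (rule arg_cong[where f="mev (uu 10) sigma10"])
  by code_simp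

lemma c4_10F1_stab: "(Jm ** R1 10 sigma10 ** Jm ** R1 10 sigma10 ** matrix_inv Jm ** R1 10 sigma10 ** Jm ** matrix_inv (R1 10 sigma10) ** matrix_inv Jm ** matrix_inv (R1 10 sigma10) ** matrix_inv Jm) \<in> Stab (gen_group {R1 10 sigma10, Jm}) (mirror (Hmat 10 sigma10) (R1 10 sigma10))"
  by (rule stab_lemma[OF c4_10F1_mem gam10[OF c4_10F1_mem] c4_10F1_comm])


lemma c4_10F2_mem: "(matrix_inv (R1 10 sigma10) ** matrix_inv Jm ** matrix_inv (R1 10 sigma10) ** matrix_inv Jm ** matrix_inv (R1 10 sigma10) ** Jm ** R1 10 sigma10 ** Jm ** R1 10 sigma10) \<in> gen_group {R1 10 sigma10, Jm}" by (intro gen_mult ls10)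
lemma c4_10F2_comm: "(matrix_inv (R1 10 sigma10) ** matrix_inv Jm ** matrix_inv (R1 10 sigma10) ** matrix_inv Jm ** matrix_inv (R1 10 sigma10) ** Jm ** R1 10 sigma10 ** Jm ** R1 10 sigma10) ** mpow (R1 10 sigma10 ** matrix_inv (R3 10 sigma10) ** R2 10 sigma10 ** R3 10 sigma10) 3 = mpow (R1 10 sigma10 ** matrix_inv (R3 10 sigma10) ** R2 10 sigma10 ** R3 10 sigma10) 3 ** (matrix_inv (R1 10 sigma10) ** matrix_inv Jm ** matrix_inv (R1 10 sigma10) ** matrix_inv Jm ** matrix_inv (R1 10 sigma10) ** Jm ** R1 10 sigma10 ** Jm ** R1 10 sigma10)"
  apply ((simp only: R2_def R3_def mpow3 invR2_10 invR3_10)?)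
  apply (simp only: R1eq10 Jeq10 Ieq10 R1inv10 Jinv10 fold10)
  apply (rule arg_cong[where f="mev (uu 10) sigma10"])
  by code_simp

lemma c4_10F2_stab: "(matrix_inv (R1 10 sigma10) ** matrix_inv Jm ** matrix_inv (R1 10 sigma10) ** matrix_inv Jm ** matrix_inv (R1 10 sigma10) ** Jm ** R1 10 sigma10 ** Jm ** R1 10 sigma10) \<in> Stab (gen_group {R1 10 sigma10, Jm}) (mirror (Hmat 10 sigma10) (mpow (R1 10 sigma10 ** matrix_inv (R3 10 sigma10) ** R2 10 sigma10 ** R3 10 sigma10) 3))"
  by (rule stab_lemma[OF c4_10F2_mem gam10[OF c4_10F2_mem] c4_10F2_comm])


lemma c4_10F3_mem: "(Jm ** matrix_inv (R1 10 sigma10) ** matrix_inv Jm ** matrix_inv (R1 10 sigma10) ** matrix_inv Jm ** matrix_inv (R1 10 sigma10) ** Jm ** R1 10 sigma10 ** Jm ** R1 10 sigma10 ** matrix_inv Jm) \<in> gen_group {R1 10 sigma10, Jm}" by (intro gen_mult ls10)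
lemma c4_10F3_comm: "(Jm ** matrix_inv (R1 10 sigma10) ** matrix_inv Jm ** matrix_inv (R1 10 sigma10) ** matrix_inv Jm ** matrix_inv (R1 10 sigma10) ** Jm ** R1 10 sigma10 ** Jm ** R1 10 sigma10 ** matrix_inv Jm) ** R1 10 sigma10 = R1 10 sigma10 ** (Jm ** matrix_inv (R1 10 sigma10) ** matrix_inv Jm ** matrix_inv (R1 10 sigma10) ** matrix_inv Jm ** matrix_inv (R1 10 sigma10) ** Jm ** R1 10 sigma10 ** Jm ** R1 10 sigma10 ** matrix_inv Jm)"
  apply ((simp only: R2_def R3_def mpow3 invR2_10 invR3_10)?)
  apply (simp only: R1eq10 Jeq10 Ieq10 R1inv10 Jinv10 fold10)
  apply (rule arg_cong[where f="mev (uu 10) sigma10"])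
  by code_simp

lemma c4_10F3_stab: "(Jm ** matrix_inv (R1 10 sigma10) ** matrix_inv Jm ** matrix_inv (R1 10 sigma10) ** matrix_inv Jm ** matrix_inv (R1 10 sigma10) ** Jm ** R1 10 sigma10 ** Jm ** R1 10 sigma10 ** matrix_inv Jm) \<in> Stab (gen_group {R1 10 sigma10, Jm}) (mirror (Hmat 10 sigma10) (R1 10 sigma10))"
  by (rule stab_lemma[OF c4_10F3_mem gam10[OF c4_10F3_mem] c4_10F3_comm])


lemma c4_10J: "Jm = mat (- (uu 10 ^ 25)) ** ((matrix_inv Jm ** matrix_inv (R1 10 sigma10) ** matrix_inv Jm ** R1 10 sigma10 ** Jm ** R1 10 sigma10 ** Jm) ** (Jm ** R1 10 sigma10 ** Jm ** R1 10 sigma10 ** matrix_inv Jm ** R1 10 sigma10 ** Jm ** matrix_inv (R1 10 sigma10) ** matrix_inv Jm ** matrix_inv (R1 10 sigma10) ** matrix_inv Jm) ** (matrix_inv (R1 10 sigma10) ** matrix_inv Jm ** matrix_inv (R1 10 sigma10) ** matrix_inv Jm ** matrix_inv (R1 10 sigma10) ** Jm ** R1 10 sigma10 ** Jm ** R1 10 sigma10) ** (Jm ** matrix_inv (R1 10 sigma10) ** matrix_inv Jm ** matrix_inv (R1 10 sigma10) ** matrix_inv Jm ** matrix_inv (R1 10 sigma10) ** Jm ** R1 10 sigma10 ** Jm ** R1 10 sigma10 ** matrix_inv Jm))"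
  apply (simp only: sc10)
  apply (simp only: R1eq10 Jeq10 Ieq10 R1inv10 Jinv10 fold10)
  apply (rule arg_cong[where f="mev (uu 10) sigma10"])
  by code_simp

lemma c4_10: "proj_generates (gen_group {R1 10 sigma10, Jm}) (Stab (gen_group {R1 10 sigma10, Jm}) (mirror (Hmat 10 sigma10) (R1 10 sigma10)) \<union> Stab (gen_group {R1 10 sigma10, Jm}) (mirror (Hmat 10 sigma10) (mpow (R1 10 sigma10 ** matrix_inv (R3 10 sigma10) ** R2 10 sigma10 ** R3 10 sigma10) 3)))"
  apply (rule pg_lemma[OF UnI1[OF s1_10] Jinv2_10 c4_10J gen_mult[OF gen_mult[OF gen_mult[OF gen_S[OF UnI2[OF c4_10F0_stab]] gen_S[OF UnI1[OF c4_10F1_stab]]] gen_S[OF UnI2[OF c4_10F2_stab]]] gen_S[OF UnI1[OF c4_10F3_stab]]]])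
  by (simp add: uu_nz)


theorem theorem11p3:
  fixes p :: nat
  assumes "p \<in> {4, 5, 10}"
  defines "\<Gamma> \<equiv> gen_group {R1 p sigma10, Jm}"
    and "H \<equiv> Hmat p sigma10"
    and "r1 \<equiv> R1 p sigma10" and "r2 \<equiv> R2 p sigma10" and "r3 \<equiv> R3 p sigma10"
  shows "(\<forall>A \<in> {mpow (r1 ** r2) 5, mpow (r1 ** r3) 5}.
            proj_generates \<Gamma> (Stab \<Gamma> (mirror H r1) \<union> Stab \<Gamma> (mirror H A)))
       \<and> (p = 10 \<longrightarrow>
          (\<forall>A \<in> {mpow (r1 ** r2 ** r3 ** matrix_inv r2) 3,
                  mpow (r1 ** matrix_inv r3 ** r2 ** r3) 3}.
            proj_generates \<Gamma> (Stab \<Gamma> (mirror H r1) \<union> Stab \<Gamma> (mirror H A))))"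
  proof -
  from assms(1) consider "p = 4" | "p = 5" | "p = 10" by blast
  then show ?thesis
  proof cases
    case 1
    show ?thesis unfolding \<Gamma>_def H_def r1_def r2_def r3_def 1 using c1_4 c2_4 by simp
  next
    case 2
    show ?thesis unfolding \<Gamma>_def H_def r1_def r2_def r3_def 2 using c1_5 c2_5 by simp
  next
    case 3
    show ?thesis unfolding \<Gamma>_def H_def r1_def r2_def r3_def 3 using c1_10 c2_10 c3_10 c4_10 by simp
  qed
qed

end
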